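(* Let $\varphi\colon A\to B$ and $\psi\colon B\to C$ be local homomorphisms of noetherian local rings with $\varphi$ surjective. Then $\operatorname{rd}(\psi\circ\varphi)=\operatorname{rd}(\varphi)+\operatorname{rd}(\psi)$.
   Context: All rings are commutative and noetherian with identity. A local homomorphism $\varphi\colon (A,m,K)\to(B,n,L)$ satisfies $\varphi(m)\subseteq n$. The regularity defect $\operatorname{rd}(\varphi)$ is the $L$-dimension of the kernel of the natural $L$-linear map $m/m^2\otimes_K L\to n/n^2$, $\bar x\otimes\bar b\mapsto \overline{\varphi(x)b}$. *)

theory Defs
  imports Main
begin

definition is_ideal :: "'a::comm_ring_1 set \<Rightarrow> bool" where
  "is_ideal I \<longleftrightarrow> 0 \<in> I \<and> (\<forall>x\<in>I. \<forall>y\<in>I. x + y \<in> I) \<and> (\<forall>r. \<forall>x\<in>I. r * x \<in> I)"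

definition ideal_gen :: "'a::comm_ring_1 set \<Rightarrow> 'a set" where
  "ideal_gen S = \<Inter> {I. is_ideal I \<and> S \<subseteq> I}"

definition maximal_ideal :: "'a::comm_ring_1 set \<Rightarrow> bool" where
  "maximal_ideal m \<longleftrightarrow> is_ideal m \<and> m \<noteq> UNIV \<and>
     (\<forall>J. is_ideal J \<and> m \<subseteq> J \<longrightarrow> J = m \<or> J = UNIV)"

definition noetherian_ring :: "'a::comm_ring_1 itself \<Rightarrow> bool" where
  "noetherian_ring _ \<longleftrightarrow> (\<forall>I::'a set. is_ideal I \<longrightarrow> (\<exists>S. finite S \<and> I = ideal_gen S))"

definition local_ring :: "'a::comm_ring_1 itself \<Rightarrow> bool" where
  "local_ring _ \<longleftrightarrow> (\<exists>!m::'a set. maximal_ideal m)"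

definition noetherian_local_ring :: "'a::comm_ring_1 itself \<Rightarrow> bool" where
  "noetherian_local_ring T \<longleftrightarrow> noetherian_ring T \<and> local_ring T"

definition max_ideal :: "'a::comm_ring_1 set" where
  "max_ideal = (THE m. maximal_ideal m)"

definition ideal_prod :: "'a::comm_ring_1 set \<Rightarrow> 'a set \<Rightarrow> 'a set" where
  "ideal_prod I J = ideal_gen {x * y | x y. x \<in> I \<and> y \<in> J}"

definition ring_hom :: "('a::comm_ring_1 \<Rightarrow> 'b::comm_ring_1) \<Rightarrow> bool" where
  "ring_hom f \<longleftrightarrow> f 1 = 1 \<and> (\<forall>x y. f (x + y) = f x + f y) \<and> (\<forall>x y. f (x * y) = f x * f y)"

definition local_hom :: "('a::comm_ring_1 \<Rightarrow> 'b::comm_ring_1) \<Rightarrow> bool" where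
  "local_hom f \<longleftrightarrow> ring_hom f \<and> f ` (max_ideal :: 'a set) \<subseteq> (max_ideal :: 'b set)"

text \<open>Construction of the L-vector space  m/m^2 \<otimes>_K L  by generators and relations,
  using representatives.  A formal sum  \<Sum> x_i \<otimes> b_i  (x_i \<in> m, b_i \<in> B) is a finitely
  supported function  f : A \<Rightarrow> B  with support in m; the B-module structure is pointwise.\<close>

definition delta :: "'a \<Rightarrow> 'b::zero \<Rightarrow> 'a \<Rightarrow> 'b" where
  "delta x b = (\<lambda>z. if z = x then b else 0)"

definition supp :: "('a \<Rightarrow> 'b::zero) \<Rightarrow> 'a set" where
  "supp f = {x. f x \<noteq> 0}"

definition formal_sums :: "('a::comm_ring_1 \<Rightarrow> 'b::comm_ring_1) set" where
  "formal_sums = {f. finite (supp f) \<and> supp f \<subseteq> max_ideal}"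

definition is_bsubmod :: "('a \<Rightarrow> 'b::comm_ring_1) set \<Rightarrow> bool" where
  "is_bsubmod U \<longleftrightarrow> (\<lambda>_. 0) \<in> U \<and> (\<forall>f\<in>U. \<forall>g\<in>U. (\<lambda>z. f z + g z) \<in> U)
      \<and> (\<forall>c. \<forall>f\<in>U. (\<lambda>z. c * f z) \<in> U)"

definition bspan :: "('a \<Rightarrow> 'b::comm_ring_1) set \<Rightarrow> ('a \<Rightarrow> 'b) set" where
  "bspan G = \<Inter> {U. is_bsubmod U \<and> G \<subseteq> U}"

text \<open>Relations: additivity in the first factor, K-balancedness (via \<phi>), vanishing
  of  x \<otimes> b  for b in the maximal ideal n of B (i.e. passage to L = B/n).  Together with the
  pointwise addition (additivity in the second factor) the quotient
  formal_sums / bspan(tensor_rels \<phi>) is  m \<otimes>_A B \<otimes>_B L = m/m^2 \<otimes>_K L.\<close>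
definition tensor_rels :: "('a::comm_ring_1 \<Rightarrow> 'b::comm_ring_1) \<Rightarrow> ('a \<Rightarrow> 'b) set" where
  "tensor_rels \<phi> =
     {(\<lambda>z. delta (x + y) b z - delta x b z - delta y b z) | x y b.
         x \<in> max_ideal \<and> y \<in> max_ideal}
   \<union> {(\<lambda>z. delta (a * x) b z - delta x (\<phi> a * b) z) | a x b. x \<in> max_ideal}
   \<union> {delta x b | x b. x \<in> max_ideal \<and> b \<in> max_ideal}"

text \<open>The natural map  m/m^2 \<otimes>_K L \<rightarrow> n/n^2,  x \<otimes> b \<mapsto> \<phi>(x) b,  on representatives.\<close>
definition nat_map :: "('a::comm_ring_1 \<Rightarrow> 'b::comm_ring_1) \<Rightarrow> ('a \<Rightarrow> 'b) \<Rightarrow> 'b" where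
  "nat_map \<phi> f = (\<Sum>x\<in>supp f. \<phi> x * f x)"

definition ker_reps :: "('a::comm_ring_1 \<Rightarrow> 'b::comm_ring_1) \<Rightarrow> ('a \<Rightarrow> 'b) set" where
  "ker_reps \<phi> = {f \<in> formal_sums. nat_map \<phi> f \<in> ideal_prod max_ideal max_ideal}"

text \<open>Regularity defect: the L-dimension of the kernel  ker_reps / bspan(tensor_rels),
  i.e. the least number of kernel elements spanning the kernel (modulo the relations).\<close>
definition rd :: "('a::comm_ring_1 \<Rightarrow> 'b::comm_ring_1) \<Rightarrow> nat" where
  "rd \<phi> = (LEAST k. \<exists>S. finite S \<and> card S = k \<and> S \<subseteq> ker_reps \<phi> \<and>
                         ker_reps \<phi> = bspan (tensor_rels \<phi> \<union> S))"

end

theory Submission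
  imports Defs "HOL-Library.Function_Algebras"
begin

section \<open>Ideals and local rings\<close>

lemma ideal_0: "is_ideal I \<Longrightarrow> 0 \<in> I" by (simp add: is_ideal_def)
lemma ideal_add: "is_ideal I \<Longrightarrow> x \<in> I \<Longrightarrow> y \<in> I \<Longrightarrow> x + y \<in> I"
  by (simp add: is_ideal_def)
lemma ideal_mult: "is_ideal I \<Longrightarrow> x \<in> I \<Longrightarrow> r * x \<in> I"
  by (simp add: is_ideal_def)
lemma ideal_mult2: "is_ideal I \<Longrightarrow> x \<in> I \<Longrightarrow> x * r \<in> I"
  by (metis ideal_mult mult.commute)
lemma ideal_uminus: "is_ideal I \<Longrightarrow> x \<in> I \<Longrightarrow> - x \<in> I"
  using ideal_mult[of I x "-1"] by simp
lemma ideal_diff: "is_ideal I \<Longrightarrow> x \<in> I \<Longrightarrow> y \<in> I \<Longrightarrow> x - y \<in> I"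
  using ideal_add[of I x "-y"] ideal_uminus[of I y] by simp
lemma ideal_sum: "is_ideal I \<Longrightarrow> (\<And>i. i \<in> A \<Longrightarrow> f i \<in> I) \<Longrightarrow> sum f A \<in> I"
  by (induction A rule: infinite_finite_induct) (auto intro: ideal_0 ideal_add)

lemma ideal_gen_ideal: "is_ideal (ideal_gen S)"
  unfolding is_ideal_def
proof (intro conjI ballI allI)
  show "0 \<in> ideal_gen S" unfolding ideal_gen_def by (auto simp: is_ideal_def)
  fix x y assume "x \<in> ideal_gen S" "y \<in> ideal_gen S"
  then show "x + y \<in> ideal_gen S" unfolding ideal_gen_def by (auto simp: is_ideal_def)
next
  fix r x assume "x \<in> ideal_gen S"
  then show "r * x \<in> ideal_gen S" unfolding ideal_gen_def by (auto simp: is_ideal_def)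
qed
lemma ideal_gen_sub: "is_ideal J \<Longrightarrow> S \<subseteq> J \<Longrightarrow> ideal_gen S \<subseteq> J"
  unfolding ideal_gen_def by (rule Inter_lower) simp
lemma ideal_gen_incl: "S \<subseteq> ideal_gen S"
  unfolding ideal_gen_def by (rule Inter_greatest) simp

lemma ideal_prod_ideal: "is_ideal (ideal_prod I J)"
  by (simp add: ideal_prod_def ideal_gen_ideal)
lemma ideal_prod_incl: "x \<in> I \<Longrightarrow> y \<in> J \<Longrightarrow> x * y \<in> ideal_prod I J"
  unfolding ideal_prod_def by (rule subsetD[OF ideal_gen_incl]) blast

lemma local_max: "local_ring TYPE('a::comm_ring_1) \<Longrightarrow> maximal_ideal (max_ideal :: 'a set)"
  unfolding local_ring_def max_ideal_def by (rule theI')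

lemma local_unique: "local_ring TYPE('a::comm_ring_1) \<Longrightarrow> maximal_ideal (M :: 'a set) \<Longrightarrow> M = max_ideal"
  unfolding local_ring_def max_ideal_def by (metis the_equality)

lemma max_ideal_ideal: "local_ring TYPE('a::comm_ring_1) \<Longrightarrow> is_ideal (max_ideal :: 'a set)"
  using local_max maximal_ideal_def by blast

lemma one_notin_max: "local_ring TYPE('a::comm_ring_1) \<Longrightarrow> (1::'a) \<notin> max_ideal"
proof
  assume l: "local_ring TYPE('a)" and o: "(1::'a) \<in> max_ideal"
  have "\<forall>x::'a. x \<in> max_ideal" using ideal_mult[OF max_ideal_ideal[OF l] o] by (metis mult.right_neutral)
  then show False using local_max[OF l] unfolding maximal_ideal_def by blast
qed

lemma unit_not_max: "local_ring TYPE('a::comm_ring_1) \<Longrightarrow> u * x = 1 \<Longrightarrow> (x::'a) \<notin> max_ideal"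
  using ideal_mult[OF max_ideal_ideal, of x u] one_notin_max by metis

lemma nonmax_unit:
  assumes l: "local_ring TYPE('a::comm_ring_1)" and x: "(x::'a) \<notin> max_ideal"
  shows "\<exists>u. u * x = 1"
proof (rule ccontr)
  assume nu: "\<not> (\<exists>u. u * x = 1)"
  define A where "A = {J::'a set. is_ideal J \<and> x \<in> J \<and> 1 \<notin> J}"
  define P where "P = {r * x | r. True}"
  have PI: "is_ideal P"
    unfolding is_ideal_def P_def
  proof (intro conjI ballI allI)
    have "(0::'a) = 0 * x" by simp
    then show "0 \<in> {r * x |r. True}" by blast
    fix a b assume "a \<in> {r * x |r. True}" "b \<in> {r * x |r. True}"
    then obtain r s where "a = r * x" "b = s * x" by blast
    then have "a + b = (r + s) * x" by (simp add: distrib_right)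
    then show "a + b \<in> {r * x |r. True}" by blast
  next
    fix t a assume "a \<in> {r * x |r. True}"
    then obtain r where "a = r * x" by blast
    then have "t * a = (t * r) * x" by (simp add: mult.assoc)
    then show "t * a \<in> {r * x |r. True}" by blast
  qed
  have "x = 1 * x" by simp
  then have "x \<in> P" unfolding P_def by blast
  moreover have "1 \<notin> P" using nu unfolding P_def by auto
  ultimately have PA: "P \<in> A" using PI unfolding A_def by blast
  have "\<forall>C\<in>chains A. \<exists>U\<in>A. \<forall>X\<in>C. X \<subseteq> U"
  proof
    fix C assume C: "C \<in> chains A"
    show "\<exists>U\<in>A. \<forall>X\<in>C. X \<subseteq> U"
    proof (cases "C = {}")
      case True then show ?thesis using PA by blast
    next
      case False
      have CA: "C \<subseteq> A" and ch: "\<forall>X\<in>C. \<forall>Y\<in>C. X \<subseteq> Y \<or> Y \<subseteq> X"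
        using C unfolding chains_def chain_subset_def by auto
      have "\<Union>C \<in> A"
        unfolding A_def is_ideal_def
      proof (intro CollectI conjI ballI allI)
        show "0 \<in> \<Union>C" using False CA unfolding A_def is_ideal_def by blast
        show "x \<in> \<Union>C" using False CA unfolding A_def by blast
        show "1 \<notin> \<Union>C" using CA unfolding A_def by blast
        fix a b assume a: "a \<in> \<Union>C" and b: "b \<in> \<Union>C"
        then obtain X Y where X: "X \<in> C" "a \<in> X" and Y: "Y \<in> C" "b \<in> Y" by blast
        show "a + b \<in> \<Union>C"
        proof (cases "X \<subseteq> Y")
          case True then show ?thesis using X Y CA unfolding A_def is_ideal_def by blast
        next
          case False then have "Y \<subseteq> X" using ch X Y by blast
          then show ?thesis using X Y CA unfolding A_def is_ideal_def by blast
        qed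
      next
        fix r a assume "a \<in> \<Union>C"
        then show "r * a \<in> \<Union>C" using CA unfolding A_def is_ideal_def by blast
      qed
      then show ?thesis by blast
    qed
  qed
  from Zorn_Lemma2[OF this] obtain M where MA: "M \<in> A" and Mmax: "\<forall>X\<in>A. M \<subseteq> X \<longrightarrow> X = M" by blast
  have "maximal_ideal M"
    unfolding maximal_ideal_def
  proof (intro conjI allI impI)
    show "is_ideal M" using MA A_def by blast
    show "M \<noteq> UNIV" using MA A_def by blast
    fix J assume J: "is_ideal J \<and> M \<subseteq> J"
    show "J = M \<or> J = UNIV"
    proof (cases "1 \<in> J")
      case True
      then have "J = UNIV" using J ideal_mult[of J 1] by (metis UNIV_eq_I mult.right_neutral)
      then show ?thesis by blast
    next
      case False
      then have "J \<in> A" using J MA unfolding A_def by blast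
      then show ?thesis using Mmax J by blast
    qed
  qed
  then have "M = max_ideal" using local_unique[OF l] by blast
  then show False using MA x unfolding A_def by simp
qed

lemma unit_mult_max: "local_ring TYPE('a::comm_ring_1) \<Longrightarrow> u * v = 1 \<Longrightarrow> (v * y::'a) \<in> max_ideal \<Longrightarrow> y \<in> max_ideal"
  using ideal_mult[OF max_ideal_ideal, of "v*y" u] by (metis mult.assoc mult_1)

lemma nonmax_mult: "local_ring TYPE('a::comm_ring_1) \<Longrightarrow> (x::'a) \<notin> max_ideal \<Longrightarrow> y \<notin> max_ideal \<Longrightarrow> x * y \<notin> max_ideal"
proof -
  assume l: "local_ring TYPE('a)" and x: "x \<notin> max_ideal" and y: "y \<notin> max_ideal"
  obtain u where u: "u * x = 1" using nonmax_unit[OF l x] by blast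
  obtain v where v: "v * y = 1" using nonmax_unit[OF l y] by blast
  have "(u*v) * (x*y) = 1" using u v by (metis mult.assoc mult.commute mult.left_neutral)
  then show ?thesis using unit_not_max[OF l] by blast
qed


definition smul :: "'b::comm_ring_1 \<Rightarrow> ('a \<Rightarrow> 'b) \<Rightarrow> 'a \<Rightarrow> 'b" where
  "smul c f = (\<lambda>z. c * f z)"

lemma smul_apply: "smul c f z = c * f z" by (simp add: smul_def)
lemma smul_add_right: "smul c (f + g) = smul c f + smul c g"
  by (rule ext) (simp add: smul_apply distrib_left)
lemma smul_add_left: "smul (a + b) f = smul a f + smul b f"
  by (rule ext) (simp add: smul_apply distrib_right)
lemma smul_diff_right: "smul c (f - g) = smul c f - smul c g"
  by (rule ext) (simp add: smul_apply right_diff_distrib)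
lemma smul_diff_left: "smul (a - b) f = smul a f - smul b f"
  by (rule ext) (simp add: smul_apply left_diff_distrib)
lemma smul_uminus_left: "smul (- a) f = - smul a f"
  by (rule ext) (simp add: smul_apply)
lemma smul_uminus_right: "smul a (- f) = - smul a f"
  by (rule ext) (simp add: smul_apply)
lemma smul_smul: "smul a (smul b f) = smul (a * b) f"
  by (rule ext) (simp add: smul_apply mult.assoc)
lemma smul_one[simp]: "smul 1 f = f" by (rule ext) (simp add: smul_apply)
lemma smul_zero_left[simp]: "smul 0 f = 0" by (rule ext) (simp add: smul_apply)
lemma smul_zero_right[simp]: "smul c 0 = 0" by (rule ext) (simp add: smul_apply)
lemma sum_apply: "(\<Sum>i\<in>A. f i) x = (\<Sum>i\<in>A. f i x)"
  by (induction A rule: infinite_finite_induct) auto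
lemma smul_sum_right: "smul c (\<Sum>i\<in>A. f i) = (\<Sum>i\<in>A. smul c (f i))"
  by (rule ext) (simp add: smul_apply sum_apply sum_distrib_left)
lemma smul_sum_left: "smul (\<Sum>i\<in>A. a i) f = (\<Sum>i\<in>A. smul (a i) f)"
  by (rule ext) (simp add: smul_apply sum_apply sum_distrib_right)

lemma delta_apply: "delta x b z = (if z = x then b else 0)" by (simp add: delta_def)
lemma delta_zero[simp]: "delta x (0::'b::comm_ring_1) = 0" by (rule ext) (simp add: delta_def)
lemma delta_add: "delta x ((a::'b::comm_ring_1) + b) = delta x a + delta x b"
  by (rule ext) (simp add: delta_def)
lemma delta_diff: "delta x ((a::'b::comm_ring_1) - b) = delta x a - delta x b"
  by (rule ext) (simp add: delta_def)
lemma delta_uminus: "delta x (- (a::'b::comm_ring_1)) = - delta x a"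
  by (rule ext) (simp add: delta_def)
lemma smul_delta: "smul c (delta x b) = delta x (c * (b::'b::comm_ring_1))"
  by (rule ext) (simp add: smul_apply delta_def)
lemma delta_sum: "delta x (\<Sum>i\<in>A. b i) = (\<Sum>i\<in>A. delta x (b i::'b::comm_ring_1))"
  by (induction A rule: infinite_finite_induct) (auto simp: delta_add)

lemma supp_add: "supp (f + g) \<subseteq> supp f \<union> supp (g::'a \<Rightarrow> 'b::comm_ring_1)" by (auto simp: supp_def)
lemma supp_diff: "supp (f - g) \<subseteq> supp f \<union> supp (g::'a \<Rightarrow> 'b::ab_group_add)" by (auto simp: supp_def)
lemma supp_uminus[simp]: "supp (- f) = supp (f::'a \<Rightarrow> 'b::ab_group_add)" by (auto simp: supp_def)
lemma supp_smul: "supp (smul c f) \<subseteq> supp f" by (auto simp: supp_def smul_apply)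
lemma supp_delta: "supp (delta x (b::'b::comm_ring_1)) \<subseteq> {x}" by (auto simp: supp_def delta_def)
lemma supp_zero[simp]: "supp (0::'a \<Rightarrow> 'b::comm_ring_1) = {}" by (auto simp: supp_def)
lemma finite_supp_add: "finite (supp f) \<Longrightarrow> finite (supp g) \<Longrightarrow> finite (supp (f + (g::'a \<Rightarrow> 'b::comm_ring_1)))"
  by (meson finite_UnI finite_subset supp_add)
lemma finite_supp_diff: "finite (supp f) \<Longrightarrow> finite (supp g) \<Longrightarrow> finite (supp (f - (g::'a \<Rightarrow> 'b::ab_group_add)))"
  by (meson finite_UnI finite_subset supp_diff)
lemma finite_supp_smul: "finite (supp f) \<Longrightarrow> finite (supp (smul c f))"
  by (meson finite_subset supp_smul)
lemma finite_supp_delta: "finite (supp (delta x (b::'b::comm_ring_1)))"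
  by (meson finite.emptyI finite_insert finite_subset supp_delta)
lemma finite_supp_sum: "(\<And>i. i \<in> A \<Longrightarrow> finite (supp (f i))) \<Longrightarrow> finite (supp (\<Sum>i\<in>A. f i :: 'a \<Rightarrow> 'b::comm_ring_1))"
  by (induction A rule: infinite_finite_induct) (auto intro: finite_supp_add)

lemma decomp_superset:
  assumes "finite T" "supp f \<subseteq> T"
  shows "f = (\<Sum>x\<in>T. delta x (f x))"
proof (rule ext)
  fix z
  have "(\<Sum>x\<in>T. delta x (f x)) z = (\<Sum>x\<in>T. if z = x then f x else 0)"
    by (simp add: sum_apply delta_def)
  also have "\<dots> = f z"
  proof (cases "z \<in> T")
    case True then show ?thesis using assms(1) by (simp add: sum.delta)
  next
    case False then have "f z = 0" using assms(2) by (auto simp: supp_def)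
    then show ?thesis using False assms(1) by (simp add: sum.delta)
  qed
  finally show "f z = (\<Sum>x\<in>T. delta x (f x)) z" by simp
qed

lemma decomp: "finite (supp f) \<Longrightarrow> f = (\<Sum>x\<in>supp f. delta x (f x))"
  by (rule decomp_superset) auto

lemma nat_map_superset:
  assumes "finite T" "supp f \<subseteq> T"
  shows "nat_map h f = (\<Sum>x\<in>T. h x * f x)"
  unfolding nat_map_def
  by (rule sum.mono_neutral_left) (use assms in \<open>auto simp: supp_def\<close>)

lemma nat_map_add: "finite (supp f) \<Longrightarrow> finite (supp g) \<Longrightarrow> nat_map h (f + g) = nat_map h f + nat_map h g"
proof -
  assume f: "finite (supp f)" and g: "finite (supp g)"
  let ?T = "supp f \<union> supp g"
  have "nat_map h (f + g) = (\<Sum>x\<in>?T. h x * (f + g) x)"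
    using f g supp_add[of f g] by (intro nat_map_superset) auto
  also have "\<dots> = (\<Sum>x\<in>?T. h x * f x) + (\<Sum>x\<in>?T. h x * g x)"
    by (simp add: distrib_left sum.distrib)
  also have "\<dots> = nat_map h f + nat_map h g"
  proof -
    have "nat_map h f = (\<Sum>x\<in>?T. h x * f x)" by (rule nat_map_superset) (use f g in auto)
    moreover have "nat_map h g = (\<Sum>x\<in>?T. h x * g x)" by (rule nat_map_superset) (use f g in auto)
    ultimately show ?thesis by simp
  qed
  finally show ?thesis .
qed

lemma nat_map_smul: "finite (supp f) \<Longrightarrow> nat_map h (smul c f) = c * nat_map h f"
proof -
  assume f: "finite (supp f)"
  have "nat_map h (smul c f) = (\<Sum>x\<in>supp f. h x * smul c f x)"
    using f supp_smul[of c f] by (intro nat_map_superset) auto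
  also have "\<dots> = (\<Sum>x\<in>supp f. h x * (c * f x))" by (simp add: smul_apply)
  also have "\<dots> = c * nat_map h f" unfolding nat_map_def sum_distrib_left by (simp add: mult.left_commute)
  finally show ?thesis .
qed

lemma nat_map_zero[simp]: "nat_map h 0 = 0" by (simp add: nat_map_def)

lemma nat_map_uminus: "finite (supp f) \<Longrightarrow> nat_map h (- f) = - nat_map h f"
  using nat_map_smul[of f h "-1"] by (metis mult_minus1 smul_one smul_uminus_left)

lemma nat_map_diff: "finite (supp f) \<Longrightarrow> finite (supp g) \<Longrightarrow> nat_map h (f - g) = nat_map h f - nat_map h g"
  using nat_map_add[of f "- g" h] nat_map_uminus[of g h] by simp

lemma nat_map_delta: "nat_map h (delta x b) = h x * b"
proof -
  have "nat_map h (delta x b) = (\<Sum>z\<in>{x}. h z * delta x b z)"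
    using supp_delta[of x b] by (intro nat_map_superset) auto
  then show ?thesis by (simp add: delta_def)
qed

lemma nat_map_sum: "(\<And>i. i \<in> A \<Longrightarrow> finite (supp (f i))) \<Longrightarrow> nat_map h (\<Sum>i\<in>A. f i) = (\<Sum>i\<in>A. nat_map h (f i))"
  by (induction A rule: infinite_finite_induct) (auto simp: nat_map_add finite_supp_sum)

section \<open>Submodules and spans\<close>

lemma sub_zero: "is_bsubmod U \<Longrightarrow> 0 \<in> U"
  by (simp add: is_bsubmod_def zero_fun_def)
lemma sub_add: "is_bsubmod U \<Longrightarrow> f \<in> U \<Longrightarrow> g \<in> U \<Longrightarrow> f + g \<in> U"
  unfolding is_bsubmod_def plus_fun_def by blast
lemma sub_smul: "is_bsubmod U \<Longrightarrow> f \<in> U \<Longrightarrow> smul c f \<in> U"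
  unfolding is_bsubmod_def smul_def by blast
lemma sub_uminus: "is_bsubmod U \<Longrightarrow> f \<in> U \<Longrightarrow> - f \<in> U"
  using sub_smul[of U f "-1"] by (metis smul_one smul_uminus_left)
lemma sub_diff: "is_bsubmod U \<Longrightarrow> f \<in> U \<Longrightarrow> g \<in> U \<Longrightarrow> f - g \<in> U"
  using sub_add[of U f "- g"] sub_uminus[of U g] by simp
lemma sub_sum: "is_bsubmod U \<Longrightarrow> (\<And>i. i \<in> A \<Longrightarrow> f i \<in> U) \<Longrightarrow> (\<Sum>i\<in>A. f i) \<in> U"
  by (induction A rule: infinite_finite_induct) (auto intro: sub_zero sub_add)
lemma sub_comb: "is_bsubmod U \<Longrightarrow> S \<subseteq> U \<Longrightarrow> (\<Sum>s\<in>S. smul (c s) s) \<in> U"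
  by (auto intro!: sub_sum sub_smul)

lemma sub_intro:
  assumes "0 \<in> U" "\<And>f g. f \<in> U \<Longrightarrow> g \<in> U \<Longrightarrow> f + g \<in> U" "\<And>c f. f \<in> U \<Longrightarrow> smul c f \<in> U"
  shows "is_bsubmod U"
  using assms unfolding is_bsubmod_def zero_fun_def plus_fun_def smul_def by auto

lemma bspan_sub: "is_bsubmod U \<Longrightarrow> G \<subseteq> U \<Longrightarrow> bspan G \<subseteq> U"
  unfolding bspan_def by (rule Inter_lower) simp
lemma bspan_incl: "G \<subseteq> bspan G"
  unfolding bspan_def by (rule Inter_greatest) simp
lemma bspan_inL: "x \<in> R \<Longrightarrow> x \<in> bspan (R \<union> S)"
  using bspan_incl[of "R \<union> S"] by blast
lemma bspan_inR: "x \<in> S \<Longrightarrow> x \<in> bspan (R \<union> S)"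
  using bspan_incl[of "R \<union> S"] by blast
lemma bspan_subR: "S \<subseteq> bspan (R \<union> S)"
  using bspan_incl[of "R \<union> S"] by blast
lemma bspan_subL: "R \<subseteq> bspan (R \<union> S)"
  using bspan_incl[of "R \<union> S"] by blast
lemma bspan_is: "is_bsubmod (bspan G)"
proof (rule sub_intro)
  show "0 \<in> bspan G" unfolding bspan_def by (auto intro: sub_zero)
  fix f g assume "f \<in> bspan G" "g \<in> bspan G"
  then show "f + g \<in> bspan G" unfolding bspan_def by (auto intro: sub_add)
next
  fix c f assume "f \<in> bspan G"
  then show "smul c f \<in> bspan G" unfolding bspan_def by (auto intro: sub_smul)
qed
lemma bspan_mono: "G \<subseteq> H \<Longrightarrow> bspan G \<subseteq> bspan H"
  by (meson bspan_incl bspan_is bspan_sub order_trans)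
lemma bspan_idem: "is_bsubmod R \<Longrightarrow> bspan R = R"
  by (simp add: bspan_incl bspan_sub subset_antisym)
lemma bspan_absorb: "bspan (bspan G \<union> S) = bspan (G \<union> S)"
proof
  show "bspan (bspan G \<union> S) \<subseteq> bspan (G \<union> S)"
    by (intro bspan_sub bspan_is Un_least) (auto intro: bspan_mono[THEN subsetD] bspan_incl[THEN subsetD])
  show "bspan (G \<union> S) \<subseteq> bspan (bspan G \<union> S)"
    by (intro bspan_mono) (use bspan_incl in blast)
qed

lemma bspan_comb:
  assumes R: "is_bsubmod R" and S: "finite S"
  shows "v \<in> bspan (R \<union> S) \<longleftrightarrow> (\<exists>r\<in>R. \<exists>c. v = r + (\<Sum>s\<in>S. smul (c s) s))"
proof
  define U where "U = {v. \<exists>r\<in>R. \<exists>c. v = r + (\<Sum>s\<in>S. smul (c s) s)}"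
  have "is_bsubmod U"
  proof (rule sub_intro)
    show "0 \<in> U" unfolding U_def using sub_zero[OF R] by (auto intro!: bexI[of _ 0] exI[of _ "\<lambda>_. 0"])
    fix f g assume "f \<in> U" "g \<in> U"
    then obtain r1 c1 r2 c2 where "r1 \<in> R" "r2 \<in> R" "f = r1 + (\<Sum>s\<in>S. smul (c1 s) s)"
      "g = r2 + (\<Sum>s\<in>S. smul (c2 s) s)" unfolding U_def by blast
    then have "f + g = (r1 + r2) + (\<Sum>s\<in>S. smul ((\<lambda>s. c1 s + c2 s) s) s)" "r1 + r2 \<in> R"
      by (simp_all add: smul_add_left sum.distrib sub_add[OF R] algebra_simps)
    then show "f + g \<in> U" unfolding U_def
      by (intro CollectI bexI[where x="r1+r2"] exI[where x="\<lambda>s. c1 s + c2 s"]) simp_all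
  next
    fix c f assume "f \<in> U"
    then obtain r1 c1 where "r1 \<in> R" "f = r1 + (\<Sum>s\<in>S. smul (c1 s) s)" unfolding U_def by blast
    then have "smul c f = smul c r1 + (\<Sum>s\<in>S. smul ((\<lambda>s. c * c1 s) s) s)" "smul c r1 \<in> R"
      by (simp_all add: smul_add_right smul_sum_right smul_smul sub_smul[OF R])
    then show "smul c f \<in> U" unfolding U_def
      by (intro CollectI bexI[where x="smul c r1"] exI[where x="\<lambda>s. c * c1 s"]) simp_all
  qed
  moreover have "R \<union> S \<subseteq> U"
  proof
    fix v assume "v \<in> R \<union> S"
    then show "v \<in> U"
    proof
      assume "v \<in> R"
      then show ?thesis unfolding U_def
        by (intro CollectI bexI[where x=v] exI[where x="\<lambda>_. 0"]) simp_all
    next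
      assume v: "v \<in> S"
      have "(\<Sum>s\<in>S. smul (if s = v then 1 else 0) s) = v"
        using S v by (simp add: if_distrib[of "\<lambda>c. smul c _"] sum.delta cong: if_cong)
      then show ?thesis unfolding U_def using sub_zero[OF R]
        by (intro CollectI bexI[where x=0] exI[where x="\<lambda>s. if s = v then 1 else 0"]) simp_all
    qed
  qed
  ultimately have "bspan (R \<union> S) \<subseteq> U" by (rule bspan_sub)
  then show "v \<in> bspan (R \<union> S) \<Longrightarrow> \<exists>r\<in>R. \<exists>c. v = r + (\<Sum>s\<in>S. smul (c s) s)"
    unfolding U_def by blast
next
  assume "\<exists>r\<in>R. \<exists>c. v = r + (\<Sum>s\<in>S. smul (c s) s)"
  then obtain r c where "r \<in> R" "v = r + (\<Sum>s\<in>S. smul (c s) s)" by blast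
  moreover have "r \<in> bspan (R \<union> S)" using \<open>r \<in> R\<close> bspan_incl by blast
  moreover have "(\<Sum>s\<in>S. smul (c s) s) \<in> bspan (R \<union> S)"
    by (rule sub_comb[OF bspan_is]) (use bspan_incl in blast)
  ultimately show "v \<in> bspan (R \<union> S)" by (simp add: sub_add[OF bspan_is])
qed


section \<open>Linear algebra modulo a submodule over a local ring\<close>

definition indep :: "('a \<Rightarrow> 'b::comm_ring_1) set \<Rightarrow> ('a \<Rightarrow> 'b) set \<Rightarrow> bool" where
  "indep R S \<longleftrightarrow> finite S \<and> (\<forall>c. (\<Sum>s\<in>S. smul (c s) s) \<in> R \<longrightarrow> (\<forall>s\<in>S. c s \<in> max_ideal))"

definition good :: "('a \<Rightarrow> 'b::comm_ring_1) set \<Rightarrow> ('a \<Rightarrow> 'b) set \<Rightarrow> bool" where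
  "good V R \<longleftrightarrow> is_bsubmod R \<and> (\<forall>c\<in>(max_ideal::'b set). \<forall>v\<in>V. smul c v \<in> R)"

definition mu :: "('a \<Rightarrow> 'b::comm_ring_1) set \<Rightarrow> ('a \<Rightarrow> 'b) set \<Rightarrow> nat" where
  "mu V R = (LEAST k. \<exists>S. finite S \<and> card S = k \<and> S \<subseteq> V \<and> V = bspan (R \<union> S))"

lemma rd_mu: "rd \<phi> = mu (ker_reps \<phi>) (tensor_rels \<phi>)"
  by (simp add: rd_def mu_def)

lemma mu_bspan: "mu V (bspan G) = mu V G"
  by (simp add: mu_def bspan_absorb)

lemma indepD: "indep R S \<Longrightarrow> (\<Sum>s\<in>S. smul (c s) s) \<in> R \<Longrightarrow> s \<in> S \<Longrightarrow> c s \<in> max_ideal"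
  unfolding indep_def by blast
lemma indep_finite: "indep R S \<Longrightarrow> finite S" unfolding indep_def by blast

lemma good_sub: "good V R \<Longrightarrow> is_bsubmod R" by (simp add: good_def)
lemma good_smul: "good V R \<Longrightarrow> c \<in> max_ideal \<Longrightarrow> v \<in> V \<Longrightarrow> smul c v \<in> R" by (simp add: good_def)

lemma sum_remove_coef:
  "finite S \<Longrightarrow> s0 \<in> S \<Longrightarrow> (\<Sum>s\<in>S. smul (c s) s) = smul (c s0) s0 + (\<Sum>s\<in>S-{s0}. smul (c s) s)"
  by (simp add: sum.remove)

lemma sum_restrict_coef:
  assumes "finite S" "S' \<subseteq> S"
  shows "(\<Sum>s\<in>S'. smul (c s) s) = (\<Sum>s\<in>S. smul (if s \<in> S' then c s else 0) s)"
proof -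
  have "(\<Sum>s\<in>S. smul (if s \<in> S' then c s else 0) s) = (\<Sum>s\<in>S. if s \<in> S' then smul (c s) s else 0)"
    by (rule sum.cong) auto
  also have "\<dots> = (\<Sum>s\<in>S \<inter> S'. smul (c s) s)" using assms(1) by (simp add: sum.inter_restrict)
  also have "S \<inter> S' = S'" using assms(2) by blast
  finally show ?thesis by simp
qed

lemma indep_subset:
  assumes "indep R S" "S' \<subseteq> S"
  shows "indep R S'"
  unfolding indep_def
proof (intro conjI allI impI ballI)
  have fS: "finite S" using assms(1) indep_def by blast
  then show "finite S'" using assms(2) finite_subset by blast
  fix c s assume c: "(\<Sum>s\<in>S'. smul (c s) s) \<in> R" and s: "s \<in> S'"
  have "(\<Sum>s\<in>S. smul ((\<lambda>s. if s \<in> S' then c s else 0) s) s) \<in> R"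
    using c sum_restrict_coef[OF fS assms(2), of c] by simp
  then have "(if s \<in> S' then c s else 0) \<in> max_ideal"
    using indepD[OF assms(1), where c="\<lambda>s. if s \<in> S' then c s else 0"] s assms(2) by blast
  then show "c s \<in> max_ideal" using s by simp
qed

lemma indep_empty: "indep R {}" by (simp add: indep_def)

lemma indicator_sum:
  "finite S \<Longrightarrow> v \<in> S \<Longrightarrow> (\<Sum>s\<in>S. smul (if s = v then 1 else 0) s) = v"
  by (simp add: if_distrib[of "\<lambda>c. smul c _"] sum.delta cong: if_cong)

lemma indep_notin:
  assumes l: "local_ring TYPE('b::comm_ring_1)" and i: "indep R (S::('a \<Rightarrow> 'b) set)" and v: "v \<in> S"
  shows "v \<notin> R"
proof
  assume "v \<in> R"
  have fS: "finite S" using i indep_def by blast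
  have "(\<Sum>s\<in>S. smul ((\<lambda>s. if s = v then 1 else 0) s) s) \<in> R"
    using indicator_sum[OF fS v] \<open>v \<in> R\<close> by simp
  then have "(if v = v then 1 else 0) \<in> (max_ideal::'b set)"
    using indepD[OF i, where c="\<lambda>s. if s = v then 1 else 0"] v by blast
  then show False using one_notin_max[OF l] by simp
qed

lemma span_one:
  assumes "is_bsubmod R"
  shows "v \<in> bspan (R \<union> {t}) \<longleftrightarrow> (\<exists>r\<in>R. \<exists>e. v = r + smul e t)"
  using bspan_comb[OF assms, of "{t}" v] by auto

lemma exchange:
  assumes l: "local_ring TYPE('b::comm_ring_1)" and T: "finite T"
  shows "good V R \<Longrightarrow> T \<subseteq> V \<Longrightarrow> indep R S \<Longrightarrow> S \<subseteq> bspan (R \<union> T) \<Longrightarrow> card S \<le> card (T::('a \<Rightarrow> 'b) set)"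
  using T
proof (induction T arbitrary: S R rule: finite_induct)
  case empty
  have "bspan (R \<union> {}) = R" using empty(1) good_sub bspan_idem by auto
  then have "S = {}" using empty indep_notin[OF l] by blast
  then show ?case by simp
next
  case (insert t T')
  have gR: "is_bsubmod R" using insert.prems(1) good_sub by blast
  define R' where "R' = bspan (R \<union> {t})"
  have RR': "R \<subseteq> R'" unfolding R'_def using bspan_incl by blast
  have gR': "good V R'" unfolding good_def R'_def
    using insert.prems(1) RR' unfolding good_def R'_def by (auto simp: bspan_is)
  have SR': "S \<subseteq> bspan (R' \<union> T')"
  proof -
    have "bspan (R \<union> insert t T') = bspan (R' \<union> T')"
      unfolding R'_def bspan_absorb by (simp add: insert_commute Un_assoc)
    then show ?thesis using insert.prems(4) by simp
  qed
  have TV: "T' \<subseteq> V" using insert.prems(2) by simp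
  have tV: "t \<in> V" using insert.prems(2) by simp
  have fS: "finite S" using insert.prems(3) indep_def by blast
  show ?case
  proof (cases "indep R' S")
    case True
    have "card S \<le> card T'" using insert.IH[OF gR' TV True SR'] .
    then show ?thesis using insert.hyps by simp
  next
    case False
    then obtain c s0 where cR': "(\<Sum>s\<in>S. smul (c s) s) \<in> R'" and s0: "s0 \<in> S" and cs0: "c s0 \<notin> max_ideal"
      using fS unfolding indep_def by blast
    obtain r1 e1 where r1: "r1 \<in> R" and e1: "(\<Sum>s\<in>S. smul (c s) s) = r1 + smul e1 t"
      using cR' span_one[OF gR] unfolding R'_def by blast
    have e1m: "e1 \<notin> max_ideal"
    proof
      assume "e1 \<in> max_ideal"
      then have "smul e1 t \<in> R" using good_smul[OF insert.prems(1)] tV by blast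
      then have "(\<Sum>s\<in>S. smul (c s) s) \<in> R" using e1 r1 sub_add[OF gR] by simp
      then show False using insert.prems(3) s0 cs0 unfolding indep_def by blast
    qed
    obtain u where u: "u * e1 = 1" using nonmax_unit[OF l e1m] by blast
    have um: "u \<notin> max_ideal" using unit_not_max[OF l, of e1 u] u by (simp add: mult.commute)
    have iS0: "indep R (S - {s0})" using indep_subset[OF insert.prems(3)] by blast
    have ind': "indep R' (S - {s0})"
      unfolding indep_def
    proof (intro conjI allI impI ballI)
      show "finite (S - {s0})" using fS by simp
      fix d s assume d: "(\<Sum>s\<in>S - {s0}. smul (d s) s) \<in> R'" and s: "s \<in> S - {s0}"
      obtain r2 e2 where r2: "r2 \<in> R" and e2: "(\<Sum>s\<in>S - {s0}. smul (d s) s) = r2 + smul e2 t"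
        using d span_one[OF gR] unfolding R'_def by blast
      have e2m: "e2 \<in> max_ideal"
      proof (rule ccontr)
        assume e2n: "e2 \<notin> max_ideal"
        define d' where "d' s = (if s \<in> S - {s0} then d s else 0) - e2 * u * c s" for s
        have "(\<Sum>s\<in>S. smul (d' s) s) = (\<Sum>s\<in>S. smul (if s \<in> S - {s0} then d s else 0) s) - (\<Sum>s\<in>S. smul (e2 * u * c s) s)"
          unfolding d'_def by (simp add: smul_diff_left sum_subtractf)
        also have "(\<Sum>s\<in>S. smul (if s \<in> S - {s0} then d s else 0) s) = (\<Sum>s\<in>S - {s0}. smul (d s) s)"
          using sum_restrict_coef[OF fS, of "S - {s0}" d] by auto
        also have "(\<Sum>s\<in>S. smul (e2 * u * c s) s) = smul (e2 * u) (\<Sum>s\<in>S. smul (c s) s)"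
          by (simp add: smul_sum_right smul_smul)
        finally have "(\<Sum>s\<in>S. smul (d' s) s) = (r2 + smul e2 t) - smul (e2 * u) (r1 + smul e1 t)"
          by (simp only: e1 e2)
        also have "\<dots> = r2 - smul (e2 * u) r1 + (smul e2 t - smul (e2 * (u * e1)) t)"
          by (simp add: smul_add_right smul_smul mult.assoc)
        also have "\<dots> = r2 - smul (e2 * u) r1" using u by simp
        finally have "(\<Sum>s\<in>S. smul (d' s) s) \<in> R"
          using r1 r2 by (simp add: sub_diff[OF gR] sub_smul[OF gR])
        then have "d' s0 \<in> max_ideal" using indepD[OF insert.prems(3), where c=d'] s0 by blast
        then have "- (e2 * (u * c s0)) \<in> max_ideal" unfolding d'_def by (simp add: mult.assoc)
        then have "e2 * (u * c s0) \<in> max_ideal" using ideal_uminus[OF max_ideal_ideal[OF l]] by fastforce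
        moreover have "e2 * (u * c s0) \<notin> max_ideal"
          using nonmax_mult[OF l e2n nonmax_mult[OF l um cs0]] .
        ultimately show False by blast
      qed
      then have "smul e2 t \<in> R" using good_smul[OF insert.prems(1)] tV by blast
      then have "(\<Sum>s\<in>S - {s0}. smul (d s) s) \<in> R" using e2 r2 sub_add[OF gR] by simp
      then show "d s \<in> max_ideal" using iS0 s unfolding indep_def by blast
    qed
    have "card (S - {s0}) \<le> card T'"
      using insert.IH[OF gR' TV ind'] SR' by blast
    then show ?thesis using insert.hyps s0 fS by (simp add: card_Diff_singleton)
  qed
qed


lemma mu_le: "finite S \<Longrightarrow> S \<subseteq> V \<Longrightarrow> V = bspan (R \<union> S) \<Longrightarrow> mu V R \<le> card S"
  unfolding mu_def by (rule Least_le) blast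

lemma mu_ex:
  assumes "finite S" "S \<subseteq> V" "V = bspan (R \<union> S)"
  shows "\<exists>S'. finite S' \<and> card S' = mu V R \<and> S' \<subseteq> V \<and> V = bspan (R \<union> S')"
proof -
  have "\<exists>k. \<exists>S. finite S \<and> card S = k \<and> S \<subseteq> V \<and> V = bspan (R \<union> S)" using assms by blast
  from LeastI_ex[OF this] show ?thesis unfolding mu_def by blast
qed

lemma min_gen_indep:
  assumes l: "local_ring TYPE('b::comm_ring_1)" and R: "is_bsubmod R" and fS: "finite S"
    and SV: "S \<subseteq> V" and V: "V = bspan (R \<union> (S::('a \<Rightarrow> 'b) set))" and c: "card S = mu V R"
  shows "indep R S"
  unfolding indep_def
proof (intro conjI allI impI ballI fS)
  fix c s0 assume cR: "(\<Sum>s\<in>S. smul (c s) s) \<in> R" and s0: "s0 \<in> S"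
  show "c s0 \<in> max_ideal"
  proof (rule ccontr)
    assume cs0: "c s0 \<notin> max_ideal"
    obtain u where u: "u * c s0 = 1" using nonmax_unit[OF l cs0] by blast
    have "smul u (\<Sum>s\<in>S. smul (c s) s) = smul u (smul (c s0) s0 + (\<Sum>s\<in>S-{s0}. smul (c s) s))"
      using sum_remove_coef[OF fS s0, of c] by simp
    also have "\<dots> = smul (u * c s0) s0 + (\<Sum>s\<in>S-{s0}. smul (u * c s) s)"
      unfolding smul_add_right smul_sum_right smul_smul ..
    finally have "smul u (\<Sum>s\<in>S. smul (c s) s) = smul (u * c s0) s0 + (\<Sum>s\<in>S-{s0}. smul (u * c s) s)" .
    then have "smul u (\<Sum>s\<in>S. smul (c s) s) = s0 + (\<Sum>s\<in>S-{s0}. smul (u * c s) s)"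
      using u by (simp only: smul_one)
    then have eq: "s0 = smul u (\<Sum>s\<in>S. smul (c s) s) - (\<Sum>s\<in>S-{s0}. smul (u * c s) s)"
      by (simp only: eq_diff_eq)
    have "smul u (\<Sum>s\<in>S. smul (c s) s) \<in> bspan (R \<union> (S - {s0}))"
      using sub_smul[OF R cR] by (rule bspan_inL)
    moreover have "(\<Sum>s\<in>S-{s0}. smul (u * c s) s) \<in> bspan (R \<union> (S - {s0}))"
      by (rule sub_comb[OF bspan_is bspan_subR])
    ultimately have "smul u (\<Sum>s\<in>S. smul (c s) s) - (\<Sum>s\<in>S-{s0}. smul (u * c s) s) \<in> bspan (R \<union> (S - {s0}))"
      by (rule sub_diff[OF bspan_is])
    then have "s0 \<in> bspan (R \<union> (S - {s0}))"
      using eq by (rule forw_subst[where P="\<lambda>z. z \<in> bspan (R \<union> (S - {s0}))", rotated])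
    then have "S \<subseteq> bspan (R \<union> (S - {s0}))" using bspan_subR[of "S - {s0}" R] by blast
    then have "bspan (R \<union> S) \<subseteq> bspan (R \<union> (S - {s0}))"
      by (intro bspan_sub bspan_is) (use bspan_subL[of R "S - {s0}"] in blast)
    moreover have "bspan (R \<union> (S - {s0})) \<subseteq> bspan (R \<union> S)" by (rule bspan_mono) blast
    ultimately have "V = bspan (R \<union> (S - {s0}))" using V by blast
    then have "mu V R \<le> card (S - {s0})" using fS SV by (intro mu_le) auto
    then show False using c s0 fS card_Diff1_less[OF fS s0] by simp
  qed
qed

lemma mu_basis:
  assumes l: "local_ring TYPE('b::comm_ring_1)" and g: "good V R" and i: "indep R T"
    and TV: "T \<subseteq> V" and V: "V = bspan (R \<union> (T::('a \<Rightarrow> 'b) set))"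
  shows "mu V R = card T"
proof (rule antisym)
  have fT: "finite T" using i indep_finite by blast
  show "mu V R \<le> card T" using mu_le[OF fT TV V] .
  obtain S' where S': "finite S'" "card S' = mu V R" "S' \<subseteq> V" "V = bspan (R \<union> S')"
    using mu_ex[OF fT TV V] by blast
  have "card T \<le> card S'" using exchange[OF l S'(1) g S'(3) i] TV S'(4) by blast
  then show "card T \<le> mu V R" using S'(2) by simp
qed

lemma ext_gen:
  assumes l: "local_ring TYPE('b::comm_ring_1)" and g: "good V R" and RW: "R \<subseteq> W"
    and W: "is_bsubmod W" and WV: "W \<subseteq> V" and G: "finite G" "G \<subseteq> V" "W \<subseteq> bspan (R \<union> G)"
  shows "indep R S \<Longrightarrow> S \<subseteq> W \<Longrightarrow> \<exists>B. S \<subseteq> B \<and> B \<subseteq> W \<and> indep R B \<and> W = bspan (R \<union> (B::('a \<Rightarrow> 'b) set))"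
proof (induction "card G - card S" arbitrary: S rule: less_induct)
  case less
  have gR: "is_bsubmod R" using g good_sub by blast
  have fS: "finite S" using less.prems(1) indep_finite by blast
  show ?case
  proof (cases "W \<subseteq> bspan (R \<union> S)")
    case True
    moreover have "bspan (R \<union> S) \<subseteq> W" using RW less.prems(2) by (intro bspan_sub W) auto
    ultimately show ?thesis using less.prems by blast
  next
    case False
    then obtain v where vW: "v \<in> W" and vn: "v \<notin> bspan (R \<union> S)" by blast
    have vS: "v \<notin> S" using vn bspan_inR by blast
    have ind: "indep R (insert v S)"
      unfolding indep_def
    proof (intro conjI allI impI ballI)
      show "finite (insert v S)" using fS by simp
      fix c s assume cR: "(\<Sum>s\<in>insert v S. smul (c s) s) \<in> R" and s: "s \<in> insert v S"
      have split: "(\<Sum>s\<in>insert v S. smul (c s) s) = smul (c v) v + (\<Sum>s\<in>S. smul (c s) s)"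
        using fS vS by simp
      have cv: "c v \<in> max_ideal"
      proof (rule ccontr)
        assume "c v \<notin> max_ideal"
        then obtain u where u: "u * c v = 1" using nonmax_unit[OF l] by blast
        have "v = smul u (\<Sum>s\<in>insert v S. smul (c s) s) - smul u (\<Sum>s\<in>S. smul (c s) s)"
          using u by (simp add: split smul_add_right smul_smul)
        moreover have "smul u (\<Sum>s\<in>insert v S. smul (c s) s) \<in> bspan (R \<union> S)"
          using sub_smul[OF gR cR] by (rule bspan_inL)
        moreover have "smul u (\<Sum>s\<in>S. smul (c s) s) \<in> bspan (R \<union> S)"
          by (intro sub_smul[OF bspan_is] sub_comb[OF bspan_is bspan_subR])
        ultimately have "smul u (\<Sum>s\<in>insert v S. smul (c s) s) - smul u (\<Sum>s\<in>S. smul (c s) s) \<in> bspan (R \<union> S)"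
          by (intro sub_diff[OF bspan_is])
        then have "v \<in> bspan (R \<union> S)"
          using \<open>v = _\<close> by (rule forw_subst[where P="\<lambda>z. z \<in> bspan (R \<union> S)", rotated])
        then show False using vn by blast
      qed
      show "c s \<in> max_ideal"
      proof (cases "s = v")
        case True then show ?thesis using cv by simp
      next
        case False
        have "smul (c v) v \<in> R" using good_smul[OF g cv] vW WV by blast
        then have "(\<Sum>s\<in>S. smul (c s) s) \<in> R"
          using sub_diff[OF gR cR \<open>smul (c v) v \<in> R\<close>] unfolding split by simp
        then show ?thesis using indepD[OF less.prems(1)] s False by blast
      qed
    qed
    have "card (insert v S) \<le> card G"
      using exchange[OF l G(1) g G(2) ind] less.prems(2) vW G(3) by blast
    then have lt: "card G - card (insert v S) < card G - card S" using fS vS by simp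
    have "insert v S \<subseteq> W" using less.prems(2) vW by blast
    from less.hyps[OF lt ind this] show ?thesis by blast
  qed
qed

lemma mu_add:
  assumes l: "local_ring TYPE('b::comm_ring_1)" and g: "good V R" and V: "is_bsubmod V"
    and W: "is_bsubmod W" and RW: "R \<subseteq> W" and WV: "W \<subseteq> V"
    and G: "finite G" "G \<subseteq> V" "V = bspan (R \<union> (G::('a \<Rightarrow> 'b) set))"
  shows "mu V R = mu W R + mu V W \<and> (\<exists>S. finite S \<and> S \<subseteq> W \<and> W = bspan (R \<union> S))"
proof -
  have gR: "is_bsubmod R" using g good_sub by blast
  obtain S1 where S1: "S1 \<subseteq> W" "indep R S1" "W = bspan (R \<union> S1)"
    using ext_gen[OF l g RW W WV G(1,2)] G(3) WV indep_empty by blast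
  have fS1: "finite S1" using S1(2) indep_finite by blast
  obtain B where B: "S1 \<subseteq> B" "B \<subseteq> V" "indep R B" "V = bspan (R \<union> B)"
    using ext_gen[OF l g _ V order_refl G(1,2), of S1] G(3) RW WV S1 by blast
  have fB: "finite B" using B(3) indep_finite by blast
  define T where "T = B - S1"
  have fT: "finite T" using fB T_def by simp
  have gW: "good W R" using g WV unfolding good_def by blast
  have m1: "mu W R = card S1" using mu_basis[OF l gW S1(2) S1(1) S1(3)] .
  have m2: "mu V R = card B" using mu_basis[OF l g B(3) B(2) B(4)] .
  have gVW: "good V W" using g W RW unfolding good_def by blast
  have BTS: "B = T \<union> S1" "T \<inter> S1 = {}" using B(1) T_def by auto
  have indT: "indep W T"
    unfolding indep_def
  proof (intro conjI allI impI ballI fT)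
    fix c t assume cW: "(\<Sum>s\<in>T. smul (c s) s) \<in> W" and t: "t \<in> T"
    obtain r d where r: "r \<in> R" and rd: "(\<Sum>s\<in>T. smul (c s) s) = r + (\<Sum>s\<in>S1. smul (d s) s)"
      using cW S1(3) bspan_comb[OF gR fS1] by blast
    define c' where "c' b = (if b \<in> T then c b else - d b)" for b
    have "(\<Sum>b\<in>B. smul (c' b) b) = (\<Sum>b\<in>T. smul (c' b) b) + (\<Sum>b\<in>S1. smul (c' b) b)"
      unfolding BTS(1) using fT fS1 BTS(2) by (rule sum.union_disjoint)
    also have "(\<Sum>b\<in>T. smul (c' b) b) = (\<Sum>b\<in>T. smul (c b) b)"
      by (rule sum.cong) (auto simp: c'_def)
    also have "(\<Sum>b\<in>S1. smul (c' b) b) = - (\<Sum>b\<in>S1. smul (d b) b)"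
      using BTS(2) by (auto simp: c'_def smul_uminus_left sum_negf[symmetric] intro!: sum.cong)
    finally have "(\<Sum>b\<in>B. smul (c' b) b) = r" using rd by simp
    then have "c' t \<in> max_ideal" using indepD[OF B(3), of c' t] r t BTS(1) by auto
    then show "c t \<in> max_ideal" using t c'_def by simp
  qed
  have TV: "T \<subseteq> V" using B(2) T_def by blast
  have VWT: "V = bspan (W \<union> T)"
  proof
    have "R \<union> B \<subseteq> W \<union> T" using RW S1(1) BTS(1) by blast
    then show "V \<subseteq> bspan (W \<union> T)" using B(4) bspan_mono by blast
    show "bspan (W \<union> T) \<subseteq> V" using WV TV by (intro bspan_sub V) auto
  qed
  have m3: "mu V W = card T" using mu_basis[OF l gVW indT TV VWT] .
  have "card B = card T + card S1" unfolding BTS(1) using fT fS1 BTS(2) by (rule card_Un_disjoint)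
  then show ?thesis using m1 m2 m3 S1 fS1 by auto
qed

lemma transfer:
  fixes Tm :: "('a \<Rightarrow> 'b::comm_ring_1) \<Rightarrow> ('c \<Rightarrow> 'b)"
  assumes V: "is_bsubmod V"
    and add: "\<And>f g. f \<in> V \<Longrightarrow> g \<in> V \<Longrightarrow> Tm (f + g) = Tm f + Tm g"
    and sm: "\<And>c f. f \<in> V \<Longrightarrow> Tm (smul c f) = smul c (Tm f)"
    and img: "Tm ` V = V'"
    and R': "is_bsubmod R'" and R'V': "R' \<subseteq> V'"
    and W: "W = {v \<in> V. Tm v \<in> R'}"
    and fg: "finite G'" "G' \<subseteq> V'" "V' = bspan (R' \<union> G')"
  shows "mu V W = mu V' R'"
proof -
  have T0: "Tm 0 = 0" using add[of 0 0] sub_zero[OF V] by simp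
  have Tdiff: "Tm (v - u) = Tm v - Tm u" if "v \<in> V" "u \<in> V" for v u
    using add[of "v - u" u] sub_diff[OF V that] that by (simp add: eq_diff_eq)
  have Tsum: "Tm (\<Sum>s\<in>S. smul (c s) (f s)) = (\<Sum>s\<in>S. smul (c s) (Tm (f s)))"
    if "\<And>s. s \<in> S \<Longrightarrow> f s \<in> V" for S c f
    using that
  proof (induction S rule: infinite_finite_induct)
    case (insert x F)
    have "Tm (\<Sum>s\<in>insert x F. smul (c s) (f s)) = Tm (smul (c x) (f x) + (\<Sum>s\<in>F. smul (c s) (f s)))"
      using insert.hyps by simp
    also have "\<dots> = Tm (smul (c x) (f x)) + Tm (\<Sum>s\<in>F. smul (c s) (f s))"
      using insert.prems by (intro add) (auto intro!: sub_smul[OF V] sub_sum[OF V])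
    also have "\<dots> = smul (c x) (Tm (f x)) + (\<Sum>s\<in>F. smul (c s) (Tm (f s)))"
      using sm[of "f x" "c x"] insert.IH insert.prems by simp
    also have "\<dots> = (\<Sum>s\<in>insert x F. smul (c s) (Tm (f s)))"
      by (rule sum.insert[OF insert.hyps(1,2), symmetric])
    finally show ?case .
  qed (simp_all add: T0)
  have V'sub: "is_bsubmod V'" using fg(3) bspan_is by simp
  have Wsub: "is_bsubmod W"
  proof (rule sub_intro)
    show "0 \<in> W" using W T0 sub_zero[OF V] sub_zero[OF R'] by simp
    fix f g assume "f \<in> W" "g \<in> W"
    then show "f + g \<in> W" using W add sub_add[OF V] sub_add[OF R'] by auto
  next
    fix c f assume "f \<in> W"
    then show "smul c f \<in> W" using W sm sub_smul[OF V] sub_smul[OF R'] by auto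
  qed
  have WV: "W \<subseteq> V" using W by blast
  obtain S' where S': "finite S'" "card S' = mu V' R'" "S' \<subseteq> V'" "V' = bspan (R' \<union> S')"
    using mu_ex[OF fg] by blast
  define lift where "lift y = (SOME x. x \<in> V \<and> Tm x = y)" for y
  have lift: "lift y \<in> V \<and> Tm (lift y) = y" if "y \<in> V'" for y
  proof -
    have "\<exists>x. x \<in> V \<and> Tm x = y" using that img by blast
    then show ?thesis unfolding lift_def by (rule someI_ex)
  qed
  have inj: "inj_on lift S'"
  proof (rule inj_onI)
    fix x y assume "x \<in> S'" "y \<in> S'" "lift x = lift y"
    then show "x = y" using lift[of x] lift[of y] S'(3) by auto
  qed
  define S where "S = lift ` S'"
  have cS: "card S = card S'" using inj S_def card_image by blast
  have fS: "finite S" using S'(1) S_def by simp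
  have SV: "S \<subseteq> V" using lift S'(3) S_def by auto
  have VS: "V = bspan (W \<union> S)"
  proof
    show "bspan (W \<union> S) \<subseteq> V" using WV SV by (intro bspan_sub V) auto
    show "V \<subseteq> bspan (W \<union> S)"
    proof
      fix v assume v: "v \<in> V"
      then have "Tm v \<in> V'" using img by blast
      then obtain r c where r: "r \<in> R'" and Tv: "Tm v = r + (\<Sum>s\<in>S'. smul (c s) s)"
        using S'(4) bspan_comb[OF R' S'(1)] by blast
      define u where "u = (\<Sum>s\<in>S'. smul (c s) (lift s))"
      have uV: "u \<in> V" unfolding u_def using lift S'(3) by (auto intro!: sub_sum[OF V] sub_smul[OF V])
      have Tu: "Tm u = (\<Sum>s\<in>S'. smul (c s) s)"
      proof -
        have "Tm u = (\<Sum>s\<in>S'. smul (c s) (Tm (lift s)))"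
          unfolding u_def by (rule Tsum) (use lift S'(3) in blast)
        also have "\<dots> = (\<Sum>s\<in>S'. smul (c s) s)"
          by (rule sum.cong) (use lift S'(3) in auto)
        finally show ?thesis .
      qed
      have "Tm (v - u) = r" using Tdiff[OF v uV] Tv Tu by simp
      then have vuW: "v - u \<in> W" using W sub_diff[OF V v uV] r by simp
      have "u \<in> bspan (W \<union> S)"
        unfolding u_def S_def by (intro sub_sum[OF bspan_is] sub_smul[OF bspan_is] bspan_inR) blast
      moreover have "v - u \<in> bspan (W \<union> S)" using vuW by (rule bspan_inL)
      ultimately have "(v - u) + u \<in> bspan (W \<union> S)" by (intro sub_add[OF bspan_is])
      then show "v \<in> bspan (W \<union> S)" by simp
    qed
  qed
  have le1: "mu V W \<le> mu V' R'" using mu_le[OF fS SV VS] cS S'(2) by simp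
  obtain S0 where S0: "finite S0" "card S0 = mu V W" "S0 \<subseteq> V" "V = bspan (W \<union> S0)"
    using mu_ex[OF fS SV VS] by blast
  have V'eq: "V' = bspan (R' \<union> Tm ` S0)"
  proof
    show "bspan (R' \<union> Tm ` S0) \<subseteq> V'" using R'V' img S0(3) by (intro bspan_sub V'sub) auto
    show "V' \<subseteq> bspan (R' \<union> Tm ` S0)"
    proof
      fix y assume "y \<in> V'"
      then obtain v where v: "v \<in> V" "y = Tm v" using img by blast
      then obtain w c where w: "w \<in> W" and vw: "v = w + (\<Sum>s\<in>S0. smul (c s) s)"
        using S0(4) bspan_comb[OF Wsub S0(1)] by blast
      have sV: "(\<Sum>s\<in>S0. smul (c s) s) \<in> V" using S0(3) by (intro sub_comb[OF V])
      have "Tm v = Tm w + Tm (\<Sum>s\<in>S0. smul (c s) s)" using vw add[OF _ sV, of w] w WV by auto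
      also have "Tm (\<Sum>s\<in>S0. smul (c s) s) = (\<Sum>s\<in>S0. smul (c s) (Tm s))"
        using Tsum[of S0 "\<lambda>s. s" c] S0(3) by auto
      finally have Tv: "Tm v = Tm w + (\<Sum>s\<in>S0. smul (c s) (Tm s))" .
      have "Tm w \<in> bspan (R' \<union> Tm ` S0)" using w W by (intro bspan_inL) blast
      moreover have "(\<Sum>s\<in>S0. smul (c s) (Tm s)) \<in> bspan (R' \<union> Tm ` S0)"
        by (intro sub_sum[OF bspan_is] sub_smul[OF bspan_is] bspan_inR) blast
      ultimately have "Tm w + (\<Sum>s\<in>S0. smul (c s) (Tm s)) \<in> bspan (R' \<union> Tm ` S0)"
        by (rule sub_add[OF bspan_is])
      then show "y \<in> bspan (R' \<union> Tm ` S0)" using v(2) Tv by simp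
    qed
  qed
  have "mu V' R' \<le> card (Tm ` S0)" using mu_le[OF _ _ V'eq] S0 img by auto
  also have "\<dots> \<le> card S0" using S0(1) card_image_le by blast
  finally show ?thesis using le1 S0(2) by simp
qed


lemma rh_add: "ring_hom f \<Longrightarrow> f (x + y) = f x + f y" by (simp add: ring_hom_def)
lemma rh_mult: "ring_hom f \<Longrightarrow> f (x * y) = f x * f y" by (simp add: ring_hom_def)
lemma rh_one: "ring_hom f \<Longrightarrow> f 1 = 1" by (simp add: ring_hom_def)
lemma rh_zero: "ring_hom f \<Longrightarrow> f 0 = 0"
  using rh_add[of f 0 0] by simp
lemma rh_uminus: "ring_hom f \<Longrightarrow> f (- x) = - f x"
  using rh_add[of f x "- x"] rh_zero[of f] by (simp add: eq_neg_iff_add_eq_0 add.commute)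
lemma rh_diff: "ring_hom f \<Longrightarrow> f (x - y) = f x - f y"
  using rh_add[of f x "- y"] rh_uminus[of f y] by simp
lemma rh_sum: "ring_hom f \<Longrightarrow> f (\<Sum>i\<in>A. g i) = (\<Sum>i\<in>A. f (g i))"
  by (induction A rule: infinite_finite_induct) (simp_all add: rh_zero rh_add)
lemma rh_comp: "ring_hom f \<Longrightarrow> ring_hom g \<Longrightarrow> ring_hom (g \<circ> f)"
  by (simp add: ring_hom_def)

lemma lh_rh: "local_hom f \<Longrightarrow> ring_hom f" by (simp add: local_hom_def)
lemma lh_max: "local_hom f \<Longrightarrow> x \<in> max_ideal \<Longrightarrow> f x \<in> max_ideal"
  unfolding local_hom_def by blast

section \<open>Formal sums, relations, kernel\<close>

lemma fs_sub: "is_bsubmod (formal_sums :: ('a::comm_ring_1 \<Rightarrow> 'b::comm_ring_1) set)"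
proof (rule sub_intro)
  show "0 \<in> (formal_sums :: ('a \<Rightarrow> 'b) set)" by (simp add: formal_sums_def)
  fix f g :: "'a \<Rightarrow> 'b" assume "f \<in> formal_sums" "g \<in> formal_sums"
  then show "f + g \<in> formal_sums" unfolding formal_sums_def
    using supp_add[of f g] finite_supp_add[of f g] by blast
next
  fix c and f :: "'a \<Rightarrow> 'b" assume "f \<in> formal_sums"
  then show "smul c f \<in> formal_sums" unfolding formal_sums_def
    using supp_smul[of c f] finite_supp_smul[of f c] by blast
qed

lemma fs_finite: "f \<in> formal_sums \<Longrightarrow> finite (supp f)" by (simp add: formal_sums_def)
lemma fs_supp: "f \<in> formal_sums \<Longrightarrow> supp f \<subseteq> max_ideal" by (simp add: formal_sums_def)

lemma delta_fs: "x \<in> max_ideal \<Longrightarrow> delta x (b::'b::comm_ring_1) \<in> (formal_sums :: ('a::comm_ring_1 \<Rightarrow> 'b) set)"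
  unfolding formal_sums_def using supp_delta[of x b] finite_supp_delta[of x b] by blast

lemma rel1_in: "x \<in> max_ideal \<Longrightarrow> y \<in> max_ideal \<Longrightarrow> delta (x + y) b - delta x b - delta y b \<in> tensor_rels f"
  unfolding tensor_rels_def fun_diff_def by blast
lemma rel2_in: "x \<in> max_ideal \<Longrightarrow> delta (a * x) b - delta x (f a * b) \<in> tensor_rels f"
  unfolding tensor_rels_def fun_diff_def by blast
lemma rel3_in: "x \<in> max_ideal \<Longrightarrow> b \<in> max_ideal \<Longrightarrow> delta x b \<in> tensor_rels f"
  unfolding tensor_rels_def by blast

lemma rels_cases:
  assumes "g \<in> tensor_rels f"
  obtains x y b where "x \<in> max_ideal" "y \<in> max_ideal" "g = delta (x + y) b - delta x b - delta y b"
    | a x b where "x \<in> max_ideal" "g = delta (a * x) b - delta x (f a * b)"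
    | x b where "x \<in> max_ideal" "b \<in> max_ideal" "g = delta x b"
  using assms unfolding tensor_rels_def fun_diff_def by blast

lemma rels_fs:
  assumes l: "local_ring TYPE('a::comm_ring_1)"
  shows "tensor_rels (f :: 'a \<Rightarrow> 'b::comm_ring_1) \<subseteq> formal_sums"
proof
  fix g assume "g \<in> tensor_rels f"
  then show "g \<in> formal_sums"
  proof (cases rule: rels_cases)
    case (1 x y b)
    have "x + y \<in> max_ideal" using 1 ideal_add[OF max_ideal_ideal[OF l]] by blast
    then show ?thesis using 1 delta_fs by (auto intro!: sub_diff[OF fs_sub])
  next
    case (2 a x b)
    have "a * x \<in> max_ideal" using 2 ideal_mult[OF max_ideal_ideal[OF l]] by blast
    then show ?thesis using 2 delta_fs by (auto intro!: sub_diff[OF fs_sub])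
  next
    case (3 x b)
    then show ?thesis using delta_fs by auto
  qed
qed

lemma R_fs: "local_ring TYPE('a::comm_ring_1) \<Longrightarrow> bspan (tensor_rels (f :: 'a \<Rightarrow> 'b::comm_ring_1)) \<subseteq> formal_sums"
  by (intro bspan_sub fs_sub rels_fs)

lemma ker_sub: "is_bsubmod (ker_reps (f :: 'a::comm_ring_1 \<Rightarrow> 'b::comm_ring_1))"
proof (rule sub_intro)
  have "(0::'b) \<in> ideal_prod max_ideal max_ideal" by (rule ideal_0[OF ideal_prod_ideal])
  then show "0 \<in> ker_reps f" unfolding ker_reps_def using sub_zero[OF fs_sub] by simp
  fix g h assume g: "g \<in> ker_reps f" and h: "h \<in> ker_reps f"
  then have gf: "g \<in> formal_sums" and hf: "h \<in> formal_sums"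
    and gi: "nat_map f g \<in> ideal_prod max_ideal max_ideal" and hi: "nat_map f h \<in> ideal_prod max_ideal max_ideal"
    by (auto simp: ker_reps_def)
  have "nat_map f (g + h) = nat_map f g + nat_map f h" using nat_map_add[OF fs_finite[OF gf] fs_finite[OF hf]] .
  also have "\<dots> \<in> ideal_prod max_ideal max_ideal" using ideal_add[OF ideal_prod_ideal gi hi] .
  finally show "g + h \<in> ker_reps f" unfolding ker_reps_def using sub_add[OF fs_sub gf hf] by simp
next
  fix c g assume g: "g \<in> ker_reps f"
  then have gf: "g \<in> formal_sums" and gi: "nat_map f g \<in> ideal_prod max_ideal max_ideal"
    by (auto simp: ker_reps_def)
  have "nat_map f (smul c g) = c * nat_map f g" using nat_map_smul[OF fs_finite[OF gf]] .
  also have "\<dots> \<in> ideal_prod max_ideal max_ideal" using ideal_mult[OF ideal_prod_ideal gi] .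
  finally show "smul c g \<in> ker_reps f" unfolding ker_reps_def using sub_smul[OF fs_sub gf] by simp
qed

lemma ker_fs: "ker_reps f \<subseteq> formal_sums" by (auto simp: ker_reps_def)

lemma nm_delta: "nat_map f (delta x b) = f x * b" by (rule nat_map_delta)

lemma rels_ker:
  assumes l: "local_ring TYPE('a::comm_ring_1)" and h: "local_hom (f :: 'a \<Rightarrow> 'b::comm_ring_1)"
  shows "tensor_rels f \<subseteq> ker_reps f"
proof
  fix g assume g: "g \<in> tensor_rels f"
  have gfs: "g \<in> formal_sums" using rels_fs[OF l] g by blast
  have rh: "ring_hom f" using h lh_rh by blast
  have "nat_map f g \<in> ideal_prod max_ideal max_ideal"
    using g
  proof (cases rule: rels_cases)
    case (1 x y b)
    have "nat_map f g = f (x + y) * b - f x * b - f y * b"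
      unfolding 1 by (simp add: nat_map_diff finite_supp_diff finite_supp_delta nm_delta)
    also have "\<dots> = 0" by (simp add: rh_add[OF rh] algebra_simps)
    finally show ?thesis using ideal_0[OF ideal_prod_ideal] by simp
  next
    case (2 a x b)
    have "nat_map f g = f (a * x) * b - f x * (f a * b)"
      unfolding 2 by (simp add: nat_map_diff finite_supp_diff finite_supp_delta nm_delta)
    also have "\<dots> = 0" by (simp add: rh_mult[OF rh] algebra_simps)
    finally show ?thesis using ideal_0[OF ideal_prod_ideal] by simp
  next
    case (3 x b)
    have "nat_map f g = f x * b" unfolding 3 by (rule nm_delta)
    then show ?thesis using ideal_prod_incl[OF lh_max[OF h 3(1)] 3(2)] by simp
  qed
  then show "g \<in> ker_reps f" using gfs by (simp add: ker_reps_def)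
qed

lemma R_ker: "local_ring TYPE('a::comm_ring_1) \<Longrightarrow> local_hom (f :: 'a \<Rightarrow> 'b::comm_ring_1) \<Longrightarrow> bspan (tensor_rels f) \<subseteq> ker_reps f"
  by (intro bspan_sub ker_sub rels_ker)

lemma good_fs:
  assumes la: "local_ring TYPE('a::comm_ring_1)" and lb: "local_ring TYPE('b::comm_ring_1)"
  shows "good (formal_sums :: ('a \<Rightarrow> 'b) set) (bspan (tensor_rels f))"
  unfolding good_def
proof (intro conjI ballI bspan_is)
  fix c :: 'b and v :: "'a \<Rightarrow> 'b" assume c: "c \<in> max_ideal" and v: "v \<in> formal_sums"
  have "smul c v = (\<Sum>x\<in>supp v. delta x (c * v x))"
    using decomp[OF fs_finite[OF v]] by (metis (no_types, lifting) smul_delta smul_sum_right sum.cong smul_apply)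
  also have "\<dots> \<in> bspan (tensor_rels f)"
  proof (rule sub_sum[OF bspan_is])
    fix x assume "x \<in> supp v"
    then have "x \<in> max_ideal" using fs_supp[OF v] by blast
    moreover have "c * v x \<in> max_ideal" using ideal_mult2[OF max_ideal_ideal[OF lb] c] .
    ultimately show "delta x (c * v x) \<in> bspan (tensor_rels f)"
      using rel3_in bspan_incl by blast
  qed
  finally show "smul c v \<in> bspan (tensor_rels f)" .
qed

lemma fg_fs:
  assumes na: "noetherian_local_ring TYPE('a::comm_ring_1)" and h: "local_hom (f :: 'a \<Rightarrow> 'b::comm_ring_1)"
  shows "\<exists>G. finite G \<and> G \<subseteq> (formal_sums :: ('a \<Rightarrow> 'b) set) \<and> formal_sums = bspan (bspan (tensor_rels f) \<union> G)"
proof -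
  have la: "local_ring TYPE('a)" and nr: "noetherian_ring TYPE('a)"
    using na by (auto simp: noetherian_local_ring_def)
  obtain Gen where Gen: "finite Gen" "(max_ideal :: 'a set) = ideal_gen Gen"
    using nr max_ideal_ideal[OF la] unfolding noetherian_ring_def by blast
  define G where "G = (\<lambda>g. delta g (1::'b)) ` Gen"
  define Sp where "Sp = bspan (bspan (tensor_rels f) \<union> G)"
  have GenM: "Gen \<subseteq> max_ideal" using Gen(2) ideal_gen_incl by blast
  have Gfs: "G \<subseteq> formal_sums" unfolding G_def using GenM delta_fs by blast
  have RSp: "bspan (tensor_rels f) \<subseteq> Sp" unfolding Sp_def by (rule bspan_subL)
  have relSp: "g \<in> tensor_rels f \<Longrightarrow> g \<in> Sp" for g using RSp bspan_incl by blast
  define J where "J = {x \<in> (max_ideal :: 'a set). \<forall>b. delta x b \<in> Sp}"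
  have mI: "is_ideal (max_ideal :: 'a set)" using max_ideal_ideal[OF la] .
  have spS: "is_bsubmod Sp" unfolding Sp_def by (rule bspan_is)
  have "is_ideal J"
    unfolding is_ideal_def
  proof (intro conjI ballI allI)
    have "delta 0 b \<in> Sp" for b
    proof -
      have "delta (0 + 0) b - delta 0 b - delta 0 b \<in> Sp" using relSp rel1_in ideal_0[OF mI] by blast
      then have "- (delta (0 + 0) b - delta 0 b - delta 0 b) \<in> Sp" by (rule sub_uminus[OF spS])
      then show ?thesis by simp
    qed
    then show "0 \<in> J" unfolding J_def using ideal_0[OF mI] by blast
  next
    fix x y assume x: "x \<in> J" and y: "y \<in> J"
    show "x + y \<in> J" unfolding J_def
    proof (intro CollectI conjI allI)
      show "x + y \<in> max_ideal" using x y J_def ideal_add[OF mI] by blast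
      fix b
      have "delta (x + y) b - delta x b - delta y b \<in> Sp" using relSp rel1_in x y J_def by blast
      moreover have "delta x b \<in> Sp" "delta y b \<in> Sp" using x y J_def by blast+
      ultimately have "(delta (x + y) b - delta x b - delta y b) + delta x b + delta y b \<in> Sp"
        using sub_add[OF spS] by blast
      then show "delta (x + y) b \<in> Sp" by simp
    qed
  next
    fix r x assume x: "x \<in> J"
    show "r * x \<in> J" unfolding J_def
    proof (intro CollectI conjI allI)
      show "r * x \<in> max_ideal" using x J_def ideal_mult[OF mI] by blast
      fix b
      have "delta (r * x) b - delta x (f r * b) \<in> Sp" using relSp rel2_in x J_def by blast
      moreover have "delta x (f r * b) \<in> Sp" using x J_def by blast
      ultimately have "(delta (r * x) b - delta x (f r * b)) + delta x (f r * b) \<in> Sp"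
        using sub_add[OF spS] by blast
      then show "delta (r * x) b \<in> Sp" by simp
    qed
  qed
  moreover have "Gen \<subseteq> J"
  proof
    fix g assume g: "g \<in> Gen"
    have "delta g b \<in> Sp" for b
    proof -
      have "delta g 1 \<in> Sp" unfolding Sp_def G_def using g by (intro bspan_inR) blast
      then have "smul b (delta g 1) \<in> Sp" by (rule sub_smul[OF spS])
      then show ?thesis by (simp add: smul_delta)
    qed
    then show "g \<in> J" using g GenM J_def by blast
  qed
  ultimately have MJ: "max_ideal \<subseteq> J" using Gen(2) ideal_gen_sub by metis
  have "formal_sums \<subseteq> Sp"
  proof
    fix v :: "'a \<Rightarrow> 'b" assume v: "v \<in> formal_sums"
    have "(\<Sum>x\<in>supp v. delta x (v x)) \<in> Sp"
    proof (rule sub_sum[OF spS])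
      fix x assume "x \<in> supp v"
      then show "delta x (v x) \<in> Sp" using fs_supp[OF v] MJ J_def by blast
    qed
    then show "v \<in> Sp" using decomp[OF fs_finite[OF v]] by simp
  qed
  moreover have "Sp \<subseteq> formal_sums" unfolding Sp_def
    using R_fs[OF la] Gfs by (intro bspan_sub fs_sub) auto
  ultimately have "formal_sums = Sp" by blast
  then show ?thesis using Gen(1) Gfs G_def Sp_def by blast
qed

lemma hom_facts:
  assumes na: "noetherian_local_ring TYPE('a::comm_ring_1)" and lb: "local_ring TYPE('b::comm_ring_1)"
    and h: "local_hom (f :: 'a \<Rightarrow> 'b)"
  shows "good (ker_reps f) (bspan (tensor_rels f))"
    and "bspan (tensor_rels f) \<subseteq> ker_reps f"
    and "\<exists>S. finite S \<and> S \<subseteq> ker_reps f \<and> ker_reps f = bspan (bspan (tensor_rels f) \<union> S)"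
    and "good (formal_sums :: ('a \<Rightarrow> 'b) set) (bspan (tensor_rels f))"
proof -
  have la: "local_ring TYPE('a)" using na by (simp add: noetherian_local_ring_def)
  show g: "good (formal_sums :: ('a \<Rightarrow> 'b) set) (bspan (tensor_rels f))" using good_fs[OF la lb] .
  then show "good (ker_reps f) (bspan (tensor_rels f))" using ker_fs unfolding good_def by blast
  show RK: "bspan (tensor_rels f) \<subseteq> ker_reps f" using R_ker[OF la h] .
  obtain G where G: "finite G" "G \<subseteq> (formal_sums :: ('a \<Rightarrow> 'b) set)" "formal_sums = bspan (bspan (tensor_rels f) \<union> G)"
    using fg_fs[OF na h] by blast
  show "\<exists>S. finite S \<and> S \<subseteq> ker_reps f \<and> ker_reps f = bspan (bspan (tensor_rels f) \<union> S)"
    using mu_add[OF lb g fs_sub ker_sub RK ker_fs G] by blast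
qed


section \<open>Push-forward of formal sums\<close>

definition pf :: "('a \<Rightarrow> 'b) \<Rightarrow> ('a \<Rightarrow> 'c::comm_ring_1) \<Rightarrow> ('b \<Rightarrow> 'c)" where
  "pf h f = (\<Sum>x\<in>supp f. delta (h x) (f x))"

lemma pf_superset: "finite T \<Longrightarrow> supp f \<subseteq> T \<Longrightarrow> pf h f = (\<Sum>x\<in>T. delta (h x) (f x))"
  unfolding pf_def by (rule sum.mono_neutral_left) (auto simp: supp_def)

lemma pf_add: "finite (supp f) \<Longrightarrow> finite (supp g) \<Longrightarrow> pf h (f + g) = pf h f + pf h g"
proof -
  assume f: "finite (supp f)" and g: "finite (supp g)"
  let ?T = "supp f \<union> supp g"
  have "pf h (f + g) = (\<Sum>x\<in>?T. delta (h x) ((f + g) x))"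
    using f g supp_add[of f g] by (intro pf_superset) auto
  also have "\<dots> = (\<Sum>x\<in>?T. delta (h x) (f x)) + (\<Sum>x\<in>?T. delta (h x) (g x))"
    by (simp add: delta_add sum.distrib)
  also have "(\<Sum>x\<in>?T. delta (h x) (f x)) = pf h f" by (rule pf_superset[symmetric]) (use f g in auto)
  also have "(\<Sum>x\<in>?T. delta (h x) (g x)) = pf h g" by (rule pf_superset[symmetric]) (use f g in auto)
  finally show ?thesis .
qed

lemma pf_smul: "finite (supp f) \<Longrightarrow> pf h (smul c f) = smul c (pf h f)"
proof -
  assume f: "finite (supp f)"
  have "pf h (smul c f) = (\<Sum>x\<in>supp f. delta (h x) (smul c f x))"
    using f supp_smul[of c f] by (intro pf_superset) auto
  also have "\<dots> = smul c (pf h f)" by (simp add: pf_def smul_sum_right smul_delta smul_apply)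
  finally show ?thesis .
qed

lemma pf_zero[simp]: "pf h 0 = 0" by (simp add: pf_def)

lemma pf_uminus: "finite (supp f) \<Longrightarrow> pf h (- f) = - pf h f"
  using pf_smul[of f h "-1"] by (metis smul_one smul_uminus_left)

lemma pf_diff: "finite (supp f) \<Longrightarrow> finite (supp g) \<Longrightarrow> pf h (f - g) = pf h f - pf h g"
  using pf_add[of f "- g" h] pf_uminus[of g h] by simp

lemma pf_delta: "pf h (delta x b) = delta (h x) b"
  using pf_superset[of "{x}" "delta x b" h] supp_delta[of x b] by (simp add: delta_def)

lemma pf_sum: "(\<And>i. i \<in> A \<Longrightarrow> finite (supp (f i))) \<Longrightarrow> pf h (\<Sum>i\<in>A. f i) = (\<Sum>i\<in>A. pf h (f i))"
  by (induction A rule: infinite_finite_induct) (auto simp: pf_add finite_supp_sum)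

lemma pf_apply: "pf h f y = (\<Sum>x\<in>supp f. if h x = y then f x else 0)"
  by (simp add: pf_def sum_apply delta_def eq_commute)

lemma supp_pf: "supp (pf h f) \<subseteq> h ` supp f"
proof
  fix y assume "y \<in> supp (pf h f)"
  then have "(\<Sum>x\<in>supp f. if h x = y then f x else 0) \<noteq> 0" by (simp add: supp_def pf_apply)
  then obtain x where x: "x \<in> supp f" "(if h x = y then f x else 0) \<noteq> 0"
    by (rule sum.not_neutral_contains_not_neutral)
  then have "h x = y" by (auto split: if_splits)
  then show "y \<in> h ` supp f" using x(1) by blast
qed

lemma finite_supp_pf: "finite (supp f) \<Longrightarrow> finite (supp (pf h f))"
  by (rule finite_subset[OF supp_pf]) simp

lemma nat_map_pf: "finite (supp f) \<Longrightarrow> nat_map g (pf h f) = nat_map (g \<circ> h) f"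
proof -
  assume f: "finite (supp f)"
  have "nat_map g (pf h f) = (\<Sum>x\<in>supp f. nat_map g (delta (h x) (f x)))"
    unfolding pf_def by (rule nat_map_sum) (rule finite_supp_delta)
  also have "\<dots> = (\<Sum>x\<in>supp f. g (h x) * f x)" by (simp add: nat_map_delta)
  also have "\<dots> = nat_map (g \<circ> h) f" by (simp add: nat_map_def)
  finally show ?thesis .
qed

lemma pc_add: "ring_hom p \<Longrightarrow> p \<circ> (f + g) = (p \<circ> f) + (p \<circ> g)"
  by (rule ext) (simp add: rh_add)
lemma pc_diff: "ring_hom p \<Longrightarrow> p \<circ> (f - g) = (p \<circ> f) - (p \<circ> g)"
  by (rule ext) (simp add: rh_diff)
lemma pc_smul: "ring_hom p \<Longrightarrow> p \<circ> (smul b f) = smul (p b) (p \<circ> f)"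
  by (rule ext) (simp add: rh_mult smul_apply)
lemma pc_delta: "ring_hom p \<Longrightarrow> p \<circ> (delta x b) = delta x (p b)"
  by (rule ext) (simp add: delta_def rh_zero)
lemma pc_zero: "ring_hom p \<Longrightarrow> p \<circ> 0 = 0"
  by (rule ext) (simp add: rh_zero)
lemma pc_sum: "ring_hom p \<Longrightarrow> p \<circ> (\<Sum>i\<in>A. f i) = (\<Sum>i\<in>A. p \<circ> f i)"
  by (rule ext) (simp add: sum_apply rh_sum)
lemma supp_pc: "ring_hom p \<Longrightarrow> supp (p \<circ> f) \<subseteq> supp f"
  by (auto simp: supp_def rh_zero)
lemma pc_fs: "ring_hom p \<Longrightarrow> f \<in> formal_sums \<Longrightarrow> p \<circ> f \<in> formal_sums"
proof -
  assume p: "ring_hom p" and f: "f \<in> formal_sums"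
  have "finite (supp (p \<circ> f))" using supp_pc[OF p, of f] fs_finite[OF f] by (rule finite_subset)
  moreover have "supp (p \<circ> f) \<subseteq> max_ideal" using supp_pc[OF p, of f] fs_supp[OF f] by (rule order_trans)
  ultimately show ?thesis unfolding formal_sums_def by blast
qed


locale cset =
  fixes \<phi> :: "'a::comm_ring_1 \<Rightarrow> 'b::comm_ring_1" and \<psi> :: "'b \<Rightarrow> 'c::comm_ring_1"
  assumes na: "noetherian_local_ring TYPE('a)" and nb: "noetherian_local_ring TYPE('b)"
    and lc: "local_ring TYPE('c)" and h\<phi>: "local_hom \<phi>" and h\<psi>: "local_hom \<psi>" and s\<phi>: "surj \<phi>"
begin

abbreviation "FX \<equiv> (formal_sums :: ('a \<Rightarrow> 'c) set)"
abbreviation "FY \<equiv> (formal_sums :: ('b \<Rightarrow> 'c) set)"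
abbreviation "FP \<equiv> (formal_sums :: ('a \<Rightarrow> 'b) set)"
abbreviation "RX \<equiv> bspan (tensor_rels (\<psi> \<circ> \<phi>))"
abbreviation "RY \<equiv> bspan (tensor_rels \<psi>)"
abbreviation "RP \<equiv> bspan (tensor_rels \<phi>)"
abbreviation "KX \<equiv> ker_reps (\<psi> \<circ> \<phi>)"
abbreviation "KY \<equiv> ker_reps \<psi>"
abbreviation "KP \<equiv> ker_reps \<phi>"
abbreviation "mA \<equiv> (max_ideal :: 'a set)"
abbreviation "mB \<equiv> (max_ideal :: 'b set)"
abbreviation "mC \<equiv> (max_ideal :: 'c set)"

lemma la: "local_ring TYPE('a)" using na by (simp add: noetherian_local_ring_def)
lemma lb: "local_ring TYPE('b)" using nb by (simp add: noetherian_local_ring_def)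
lemma r\<phi>: "ring_hom \<phi>" using h\<phi> lh_rh by blast
lemma r\<psi>: "ring_hom \<psi>" using h\<psi> lh_rh by blast
lemma h\<chi>: "local_hom (\<psi> \<circ> \<phi>)"
  unfolding local_hom_def using rh_comp[OF r\<phi> r\<psi>] lh_max[OF h\<phi>] lh_max[OF h\<psi>] by auto
lemma r\<chi>: "ring_hom (\<psi> \<circ> \<phi>)" using h\<chi> lh_rh by blast

lemma mAi: "is_ideal mA" using max_ideal_ideal[OF la] .
lemma mBi: "is_ideal mB" using max_ideal_ideal[OF lb] .
lemma mCi: "is_ideal mC" using max_ideal_ideal[OF lc] .

lemma lft_ex: "u \<in> mB \<Longrightarrow> \<exists>x. x \<in> mA \<and> \<phi> x = u"
proof -
  assume u: "u \<in> mB"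
  obtain x where x: "\<phi> x = u" using s\<phi> by (metis surjD)
  have "x \<in> mA"
  proof (rule ccontr)
    assume "x \<notin> mA"
    then obtain v where "v * x = 1" using nonmax_unit[OF la] by blast
    then have "\<phi> v * u = 1" using x rh_mult[OF r\<phi>, of v x] rh_one[OF r\<phi>] by simp
    then show False using unit_not_max[OF lb] u by blast
  qed
  then show ?thesis using x by blast
qed

definition lft :: "'b \<Rightarrow> 'a" where "lft u = (SOME x. x \<in> mA \<and> \<phi> x = u)"

lemma lft: "u \<in> mB \<Longrightarrow> lft u \<in> mA \<and> \<phi> (lft u) = u"
  unfolding lft_def by (rule someI_ex) (rule lft_ex)

lemma fX_fin: "f \<in> FX \<Longrightarrow> finite (supp f)" by (rule fs_finite)

lemma pf_FX: "f \<in> FX \<Longrightarrow> pf \<phi> f \<in> FY"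
proof -
  assume f: "f \<in> FX"
  have "supp (pf \<phi> f) \<subseteq> \<phi> ` supp f" by (rule supp_pf)
  also have "\<dots> \<subseteq> mB" using fs_supp[OF f] lh_max[OF h\<phi>] by blast
  finally show ?thesis unfolding formal_sums_def using finite_supp_pf[OF fX_fin[OF f]] by blast
qed

lemma pf_rels: "g \<in> tensor_rels (\<psi> \<circ> \<phi>) \<Longrightarrow> pf \<phi> g \<in> tensor_rels \<psi>"
proof -
  assume "g \<in> tensor_rels (\<psi> \<circ> \<phi>)"
  then show ?thesis
  proof (cases rule: rels_cases)
    case (1 x y b)
    have "pf \<phi> g = delta (\<phi> x + \<phi> y) b - delta (\<phi> x) b - delta (\<phi> y) b"
      unfolding 1 by (simp add: pf_diff finite_supp_diff finite_supp_delta pf_delta rh_add[OF r\<phi>])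
    then show ?thesis using rel1_in lh_max[OF h\<phi>] 1 by metis
  next
    case (2 a x b)
    have "pf \<phi> g = delta (\<phi> a * \<phi> x) b - delta (\<phi> x) (\<psi> (\<phi> a) * b)"
      unfolding 2 by (simp add: pf_diff finite_supp_diff finite_supp_delta pf_delta rh_mult[OF r\<phi>])
    then show ?thesis using rel2_in lh_max[OF h\<phi>] 2 by metis
  next
    case (3 x b)
    have "pf \<phi> g = delta (\<phi> x) b" unfolding 3 by (rule pf_delta)
    then show ?thesis using rel3_in lh_max[OF h\<phi>] 3 by metis
  qed
qed

lemma pf_R: "f \<in> RX \<Longrightarrow> pf \<phi> f \<in> RY"
proof -
  define U where "U = {f \<in> FX. pf \<phi> f \<in> RY}"
  have "is_bsubmod U"
  proof (rule sub_intro)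
    show "0 \<in> U" unfolding U_def by (simp add: sub_zero fs_sub bspan_is)
    fix f g assume f: "f \<in> U" and g: "g \<in> U"
    then have "pf \<phi> (f + g) = pf \<phi> f + pf \<phi> g" unfolding U_def by (intro pf_add fX_fin) auto
    with f g show "f + g \<in> U" unfolding U_def
      by (auto intro: sub_add[OF fs_sub] sub_add[OF bspan_is])
  next
    fix c f assume f: "f \<in> U"
    then have "pf \<phi> (smul c f) = smul c (pf \<phi> f)" unfolding U_def by (intro pf_smul fX_fin) auto
    with f show "smul c f \<in> U" unfolding U_def
      by (auto intro: sub_smul[OF fs_sub] sub_smul[OF bspan_is])
  qed
  moreover have "tensor_rels (\<psi> \<circ> \<phi>) \<subseteq> U"
    unfolding U_def using rels_fs[OF la] pf_rels bspan_incl by blast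
  ultimately have "RX \<subseteq> U" by (rule bspan_sub)
  then show "f \<in> RX \<Longrightarrow> pf \<phi> f \<in> RY" unfolding U_def by blast
qed

lemma nm_pf: "f \<in> FX \<Longrightarrow> nat_map \<psi> (pf \<phi> f) = nat_map (\<psi> \<circ> \<phi>) f"
  by (rule nat_map_pf[OF fX_fin])

lemma pf_K: "f \<in> KX \<Longrightarrow> pf \<phi> f \<in> KY"
  unfolding ker_reps_def using pf_FX nm_pf by auto

lemma pf_onto: "g \<in> KY \<Longrightarrow> \<exists>f\<in>KX. pf \<phi> f = g"
proof -
  assume g: "g \<in> KY"
  have gF: "g \<in> FY" using g ker_fs by blast
  define f where "f = (\<Sum>y\<in>supp g. delta (lft y) (g y))"
  have fF: "f \<in> FX" unfolding f_def
  proof (rule sub_sum[OF fs_sub])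
    fix y assume "y \<in> supp g"
    then have "lft y \<in> mA" using lft fs_supp[OF gF] by blast
    then show "delta (lft y) (g y) \<in> FX" by (rule delta_fs)
  qed
  have "pf \<phi> f = (\<Sum>y\<in>supp g. pf \<phi> (delta (lft y) (g y)))"
    unfolding f_def by (rule pf_sum) (rule finite_supp_delta)
  also have "\<dots> = (\<Sum>y\<in>supp g. delta y (g y))"
    by (rule sum.cong) (use lft fs_supp[OF gF] in \<open>auto simp: pf_delta\<close>)
  also have "\<dots> = g" using decomp[OF fs_finite[OF gF]] by simp
  finally have pg: "pf \<phi> f = g" .
  have "nat_map (\<psi> \<circ> \<phi>) f = nat_map \<psi> g" using nm_pf[OF fF] pg by simp
  then have "f \<in> KX" using g fF unfolding ker_reps_def by simp
  then show ?thesis using pg by blast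
qed

lemma pf_img: "pf \<phi> ` KX = KY"
  using pf_K pf_onto by blast

definition WW where "WW = {f \<in> KX. pf \<phi> f \<in> RY}"

lemma facts\<chi>:
  "good KX RX" "RX \<subseteq> KX" "\<exists>S. finite S \<and> S \<subseteq> KX \<and> KX = bspan (RX \<union> S)"
  using hom_facts[OF na lc h\<chi>] by blast+

lemma facts\<psi>:
  "good KY RY" "RY \<subseteq> KY" "\<exists>S. finite S \<and> S \<subseteq> KY \<and> KY = bspan (RY \<union> S)"
  using hom_facts[OF nb lc h\<psi>] by blast+

lemma facts\<phi>:
  "good KP RP" "RP \<subseteq> KP" "\<exists>S. finite S \<and> S \<subseteq> KP \<and> KP = bspan (RP \<union> S)"
  "good FP RP"
  using hom_facts[OF na lb h\<phi>] by blast+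

lemma KX_fin: "f \<in> KX \<Longrightarrow> finite (supp f)" using ker_fs fs_finite by blast

lemma mu_top: "mu KX WW = mu KY RY"
proof -
  obtain G where G: "finite G" "G \<subseteq> KY" "KY = bspan (RY \<union> G)" using facts\<psi>(3) by blast
  show ?thesis
    by (rule transfer[OF ker_sub _ _ pf_img bspan_is facts\<psi>(2) WW_def G])
       (auto simp: pf_add pf_smul KX_fin)
qed

lemma WW_sub: "is_bsubmod WW"
proof (rule sub_intro)
  show "0 \<in> WW" unfolding WW_def by (simp add: sub_zero ker_sub bspan_is)
  fix f g assume f: "f \<in> WW" and g: "g \<in> WW"
  then have "pf \<phi> (f + g) = pf \<phi> f + pf \<phi> g" unfolding WW_def by (intro pf_add KX_fin) auto
  with f g show "f + g \<in> WW" unfolding WW_def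
    by (auto intro: sub_add[OF ker_sub] sub_add[OF bspan_is])
next
  fix c f assume f: "f \<in> WW"
  then have "pf \<phi> (smul c f) = smul c (pf \<phi> f)" unfolding WW_def by (intro pf_smul KX_fin) auto
  with f show "smul c f \<in> WW" unfolding WW_def
    by (auto intro: sub_smul[OF ker_sub] sub_smul[OF bspan_is])
qed

lemma RX_WW: "RX \<subseteq> WW" unfolding WW_def using facts\<chi>(2) pf_R by blast
lemma WW_KX: "WW \<subseteq> KX" unfolding WW_def by blast

lemma mu_split: "mu KX RX = mu WW RX + mu KX WW"
proof -
  obtain G where G: "finite G" "G \<subseteq> KX" "KX = bspan (RX \<union> G)" using facts\<chi>(3) by blast
  show ?thesis using mu_add[OF lc facts\<chi>(1) ker_sub WW_sub RX_WW WW_KX G] by blast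
qed

end


context cset
begin

lemma RY_rel1: "x \<in> mB \<Longrightarrow> y \<in> mB \<Longrightarrow> delta (x + y) b - delta x b - delta y b \<in> RY"
  using rel1_in bspan_incl by blast
lemma RY_rel2: "x \<in> mB \<Longrightarrow> delta (a * x) b - delta x (\<psi> a * b) \<in> RY"
  using rel2_in bspan_incl by blast
lemma RY_rel3: "x \<in> mB \<Longrightarrow> b \<in> mC \<Longrightarrow> delta x b \<in> RY"
  using rel3_in bspan_incl by blast
lemma RYs: "is_bsubmod RY" by (rule bspan_is)

lemma RY_delta0: "delta 0 b \<in> RY"
proof -
  have "delta (0 + 0) b - delta 0 b - delta 0 b \<in> RY" using RY_rel1 ideal_0[OF mBi] by blast
  then have "- (delta (0 + 0) b - delta 0 b - delta 0 b) \<in> RY" by (rule sub_uminus[OF RYs])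
  then show ?thesis by simp
qed

lemma sq_R: "z \<in> ideal_prod mB mB \<Longrightarrow> delta z (1::'c) \<in> RY"
proof -
  define Z where "Z = {z \<in> mB. delta z (1::'c) \<in> RY}"
  have "is_ideal Z"
    unfolding is_ideal_def
  proof (intro conjI ballI allI)
    show "0 \<in> Z" unfolding Z_def using ideal_0[OF mBi] RY_delta0 by blast
  next
    fix x y assume x: "x \<in> Z" and y: "y \<in> Z"
    have "(delta (x + y) 1 - delta x 1 - delta y 1) + delta x 1 + delta y 1 \<in> RY"
      using x y RY_rel1 unfolding Z_def by (blast intro: sub_add[OF RYs])
    then show "x + y \<in> Z" unfolding Z_def using x y ideal_add[OF mBi] Z_def by simp
  next
    fix r x assume x: "x \<in> Z"
    have "delta x (\<psi> r * 1) = smul (\<psi> r) (delta x 1)" by (simp add: smul_delta)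
    then have "delta x (\<psi> r * 1) \<in> RY" using x sub_smul[OF RYs] unfolding Z_def by simp
    then have "(delta (r * x) 1 - delta x (\<psi> r * 1)) + delta x (\<psi> r * 1) \<in> RY"
      using x RY_rel2 unfolding Z_def by (blast intro: sub_add[OF RYs])
    then show "r * x \<in> Z" unfolding Z_def using x ideal_mult[OF mBi] Z_def by simp
  qed
  moreover have "{x * y |x y. x \<in> mB \<and> y \<in> mB} \<subseteq> Z"
  proof
    fix z assume "z \<in> {x * y |x y. x \<in> mB \<and> y \<in> mB}"
    then obtain x y where xy: "z = x * y" "x \<in> mB" "y \<in> mB" by blast
    have "delta y (\<psi> x * 1) \<in> RY" using RY_rel3 xy lh_max[OF h\<psi>] by simp
    then have "(delta (x * y) 1 - delta y (\<psi> x * 1)) + delta y (\<psi> x * 1) \<in> RY"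
      using RY_rel2 xy by (blast intro: sub_add[OF RYs])
    moreover have "z \<in> mB" using xy ideal_mult[OF mBi] by simp
    ultimately show "z \<in> Z" unfolding Z_def using xy by simp
  qed
  ultimately have "ideal_prod mB mB \<subseteq> Z" unfolding ideal_prod_def by (rule ideal_gen_sub)
  then show "z \<in> ideal_prod mB mB \<Longrightarrow> delta z (1::'c) \<in> RY" unfolding Z_def by blast
qed

lemma delta_sum_R:
  assumes "finite T" "\<And>x. x \<in> T \<Longrightarrow> u x \<in> mB"
  shows "(\<Sum>x\<in>T. delta (u x) c) - delta (\<Sum>x\<in>T. u x) c \<in> RY"
  using assms
proof (induction T rule: finite_induct)
  case empty
  then show ?case using sub_uminus[OF RYs RY_delta0[of c]] by (simp only: sum.empty diff_0)
next
  case (insert x F)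
  have A: "(\<Sum>x\<in>F. delta (u x) c) - delta (\<Sum>x\<in>F. u x) c \<in> RY"
    using insert.IH insert.prems by blast
  have sF: "(\<Sum>x\<in>F. u x) \<in> mB" by (rule ideal_sum[OF mBi]) (use insert.prems in blast)
  have B: "delta (u x + (\<Sum>x\<in>F. u x)) c - delta (u x) c - delta (\<Sum>x\<in>F. u x) c \<in> RY"
    using RY_rel1 insert.prems sF by simp
  have "(\<Sum>x\<in>insert x F. delta (u x) c) - delta (\<Sum>x\<in>insert x F. u x) c
      = ((\<Sum>x\<in>F. delta (u x) c) - delta (\<Sum>x\<in>F. u x) c)
        - (delta (u x + (\<Sum>x\<in>F. u x)) c - delta (u x) c - delta (\<Sum>x\<in>F. u x) c)"
    using insert.hyps by (simp add: algebra_simps)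
  also have "\<dots> \<in> RY" using A B by (rule sub_diff[OF RYs])
  finally show ?case .
qed

lemma pc_KP: "s \<in> KP \<Longrightarrow> \<psi> \<circ> s \<in> WW"
proof -
  assume s: "s \<in> KP"
  have sF: "s \<in> FP" using s ker_fs by blast
  have fin: "finite (supp s)" using fs_finite[OF sF] .
  have sM: "supp s \<subseteq> mA" using fs_supp[OF sF] .
  have cF: "\<psi> \<circ> s \<in> FX" using pc_fs[OF r\<psi> sF] .
  have "pf \<phi> (\<psi> \<circ> s) = (\<Sum>x\<in>supp s. delta (\<phi> x) ((\<psi> \<circ> s) x))"
    using supp_pc[OF r\<psi>, of s] fin by (intro pf_superset)
  also have "\<dots> = (\<Sum>x\<in>supp s. delta (s x * \<phi> x) 1) - (\<Sum>x\<in>supp s. delta (s x * \<phi> x) 1 - delta (\<phi> x) (\<psi> (s x) * 1))"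
    by (simp add: sum_subtractf)
  finally have eq: "pf \<phi> (\<psi> \<circ> s) = (\<Sum>x\<in>supp s. delta (s x * \<phi> x) 1) - (\<Sum>x\<in>supp s. delta (s x * \<phi> x) 1 - delta (\<phi> x) (\<psi> (s x) * 1))" .
  have mem: "x \<in> supp s \<Longrightarrow> \<phi> x \<in> mB" for x using sM lh_max[OF h\<phi>] by blast
  have mem2: "x \<in> supp s \<Longrightarrow> s x * \<phi> x \<in> mB" for x using mem ideal_mult[OF mBi] by blast
  have R1: "(\<Sum>x\<in>supp s. delta (s x * \<phi> x) 1 - delta (\<phi> x) (\<psi> (s x) * 1)) \<in> RY"
    by (rule sub_sum[OF RYs]) (use RY_rel2 mem in blast)
  have R2: "(\<Sum>x\<in>supp s. delta (s x * \<phi> x) (1::'c)) - delta (\<Sum>x\<in>supp s. s x * \<phi> x) 1 \<in> RY"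
    using delta_sum_R[OF fin mem2] .
  have "(\<Sum>x\<in>supp s. s x * \<phi> x) = nat_map \<phi> s" by (simp add: nat_map_def mult.commute)
  also have "\<dots> \<in> ideal_prod mB mB" using s by (simp add: ker_reps_def)
  finally have R3: "delta (\<Sum>x\<in>supp s. s x * \<phi> x) (1::'c) \<in> RY" by (rule sq_R)
  have "(\<Sum>x\<in>supp s. delta (s x * \<phi> x) (1::'c)) = ((\<Sum>x\<in>supp s. delta (s x * \<phi> x) 1) - delta (\<Sum>x\<in>supp s. s x * \<phi> x) 1) + delta (\<Sum>x\<in>supp s. s x * \<phi> x) 1"
    by simp
  also have "\<dots> \<in> RY" using R2 R3 by (rule sub_add[OF RYs])
  finally have X: "(\<Sum>x\<in>supp s. delta (s x * \<phi> x) (1::'c)) \<in> RY" .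
  have "pf \<phi> (\<psi> \<circ> s) \<in> RY" unfolding eq using X R1 by (rule sub_diff[OF RYs])
  moreover have "\<psi> \<circ> s \<in> KX"
  proof -
    have "nat_map (\<psi> \<circ> \<phi>) (\<psi> \<circ> s) = nat_map \<psi> (pf \<phi> (\<psi> \<circ> s))" using nm_pf[OF cF] by simp
    moreover have "pf \<phi> (\<psi> \<circ> s) \<in> KY" using \<open>pf \<phi> (\<psi> \<circ> s) \<in> RY\<close> facts\<psi>(2) by blast
    ultimately show ?thesis using cF unfolding ker_reps_def by simp
  qed
  ultimately show ?thesis unfolding WW_def by blast
qed

end


context cset
begin

lemma RXs: "is_bsubmod RX" by (rule bspan_is)

lemma pc_rels: "g \<in> tensor_rels \<phi> \<Longrightarrow> \<psi> \<circ> g \<in> tensor_rels (\<psi> \<circ> \<phi>)"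
proof -
  assume "g \<in> tensor_rels \<phi>"
  then show ?thesis
  proof (cases rule: rels_cases)
    case (1 x y b)
    have "\<psi> \<circ> g = delta (x + y) (\<psi> b) - delta x (\<psi> b) - delta y (\<psi> b)"
      unfolding 1 by (simp add: pc_diff[OF r\<psi>] pc_delta[OF r\<psi>])
    then show ?thesis using rel1_in 1 by metis
  next
    case (2 a x b)
    have "\<psi> \<circ> g = delta (a * x) (\<psi> b) - delta x ((\<psi> \<circ> \<phi>) a * \<psi> b)"
      unfolding 2 by (simp add: pc_diff[OF r\<psi>] pc_delta[OF r\<psi>] rh_mult[OF r\<psi>])
    then show ?thesis using rel2_in 2 by metis
  next
    case (3 x b)
    have "\<psi> \<circ> g = delta x (\<psi> b)" unfolding 3 by (rule pc_delta[OF r\<psi>])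
    then show ?thesis using rel3_in 3 lh_max[OF h\<psi>] by metis
  qed
qed

lemma pc_R: "g \<in> RP \<Longrightarrow> \<psi> \<circ> g \<in> RX"
proof -
  define U where "U = {g. \<psi> \<circ> g \<in> RX}"
  have "is_bsubmod U"
  proof (rule sub_intro)
    show "0 \<in> U" unfolding U_def by (simp add: pc_zero[OF r\<psi>] sub_zero[OF RXs])
    fix f g assume "f \<in> U" "g \<in> U"
    then show "f + g \<in> U" unfolding U_def using pc_add[OF r\<psi>, of f g] sub_add[OF RXs] by simp
  next
    fix c f assume "f \<in> U"
    then show "smul c f \<in> U" unfolding U_def using pc_smul[OF r\<psi>, of c f] sub_smul[OF RXs] by simp
  qed
  moreover have "tensor_rels \<phi> \<subseteq> U" unfolding U_def using pc_rels bspan_incl by blast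
  ultimately have "RP \<subseteq> U" by (rule bspan_sub)
  then show "g \<in> RP \<Longrightarrow> \<psi> \<circ> g \<in> RX" unfolding U_def by blast
qed

definition DD :: "('a \<Rightarrow> 'c) set" where "DD = {delta x c | x c. x \<in> mA \<and> \<phi> x = 0}"
abbreviation "SD \<equiv> bspan (RX \<union> DD)"

lemma SDs: "is_bsubmod SD" by (rule bspan_is)

lemma SD_FX: "SD \<subseteq> FX"
proof (rule bspan_sub[OF fs_sub])
  show "RX \<union> DD \<subseteq> FX" unfolding DD_def using R_fs[OF la] delta_fs by blast
qed

lemma SD_fin: "h \<in> SD \<Longrightarrow> finite (supp h)" using SD_FX fs_finite by blast

lemma rep: "x \<in> mA \<Longrightarrow> lft (\<phi> x) \<in> mA \<and> \<phi> (lft (\<phi> x)) = \<phi> x"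
  using lft lh_max[OF h\<phi>] by blast

lemma ker0:
  assumes f: "f \<in> FX" and p: "pf \<phi> f = 0"
  shows "f \<in> SD"
proof -
  define rp where "rp x = lft (\<phi> x)" for x
  have fin: "finite (supp f)" and sM: "supp f \<subseteq> mA" using f fs_finite fs_supp by auto
  have trm: "delta x c - delta (rp x) c \<in> SD" if x: "x \<in> mA" for x c
  proof -
    have r: "rp x \<in> mA" "\<phi> (rp x) = \<phi> x" using rep[OF x] rp_def by auto
    have d: "x - rp x \<in> mA" using ideal_diff[OF mAi x r(1)] .
    have e: "rp x + (x - rp x) = x" by simp
    have "delta (rp x + (x - rp x)) c - delta (rp x) c - delta (x - rp x) c \<in> SD"
      using rel1_in[OF r(1) d] by (intro bspan_inL) (rule bspan_incl[THEN subsetD])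
    then have A: "delta x c - delta (rp x) c - delta (x - rp x) c \<in> SD" unfolding e .
    have "\<phi> (x - rp x) = 0" using r(2) rh_diff[OF r\<phi>] by simp
    then have B: "delta (x - rp x) c \<in> SD" unfolding DD_def using d by (intro bspan_inR) blast
    have "(delta x c - delta (rp x) c - delta (x - rp x) c) + delta (x - rp x) c \<in> SD"
      using A B by (rule sub_add[OF SDs])
    then show ?thesis by simp
  qed
  have zero: "(\<Sum>x\<in>supp f. delta (rp x) (f x)) = 0"
  proof (rule ext)
    fix z
    have "(\<Sum>x\<in>supp f. delta (rp x) (f x)) z = (\<Sum>x\<in>supp f. if rp x = z then f x else 0)"
      by (simp add: sum_apply delta_def eq_commute)
    also have "\<dots> = 0"
    proof (cases "\<exists>x0\<in>supp f. rp x0 = z")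
      case True
      then obtain x0 where x0: "x0 \<in> supp f" "rp x0 = z" by blast
      have iff: "rp x = z \<longleftrightarrow> \<phi> x = \<phi> z" if x: "x \<in> supp f" for x
      proof
        assume "rp x = z"
        then show "\<phi> x = \<phi> z" using rep[of x] x sM rp_def by auto
      next
        assume "\<phi> x = \<phi> z"
        moreover have "\<phi> z = \<phi> x0" using rep[of x0] x0 sM rp_def by auto
        ultimately show "rp x = z" using x0(2) rp_def by simp
      qed
      have "(\<Sum>x\<in>supp f. if rp x = z then f x else 0) = (\<Sum>x\<in>supp f. if \<phi> x = \<phi> z then f x else 0)"
        by (rule sum.cong) (use iff in auto)
      also have "\<dots> = pf \<phi> f (\<phi> z)" by (simp add: pf_apply)
      also have "\<dots> = 0" using p by simp
      finally show ?thesis .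
    next
      case False
      then show ?thesis by (intro sum.neutral) auto
    qed
    finally show "(\<Sum>x\<in>supp f. delta (rp x) (f x)) z = 0 z" by simp
  qed
  have "(\<Sum>x\<in>supp f. delta x (f x) - delta (rp x) (f x)) \<in> SD"
    by (rule sub_sum[OF SDs]) (use trm sM in blast)
  also have "(\<Sum>x\<in>supp f. delta x (f x) - delta (rp x) (f x)) = (\<Sum>x\<in>supp f. delta x (f x)) - (\<Sum>x\<in>supp f. delta (rp x) (f x))"
    by (rule sum_subtractf)
  also have "\<dots> = f" using zero decomp[OF fin] by simp
  finally show ?thesis .
qed

lemma RX_rel: "g \<in> tensor_rels (\<psi> \<circ> \<phi>) \<Longrightarrow> g \<in> SD"
  by (intro bspan_inL) (rule bspan_incl[THEN subsetD])

lemma RY_lift: "RY \<subseteq> {g. \<exists>h\<in>SD. pf \<phi> h = g}"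
proof (rule bspan_sub)
  show "is_bsubmod {g. \<exists>h\<in>SD. pf \<phi> h = g}"
  proof (rule sub_intro)
    show "0 \<in> {g. \<exists>h\<in>SD. pf \<phi> h = g}" using sub_zero[OF SDs] by force
    fix f g assume "f \<in> {g. \<exists>h\<in>SD. pf \<phi> h = g}" "g \<in> {g. \<exists>h\<in>SD. pf \<phi> h = g}"
    then obtain h1 h2 where h: "h1 \<in> SD" "h2 \<in> SD" "pf \<phi> h1 = f" "pf \<phi> h2 = g" by blast
    have "pf \<phi> (h1 + h2) = pf \<phi> h1 + pf \<phi> h2" by (rule pf_add[OF SD_fin[OF h(1)] SD_fin[OF h(2)]])
    then have "pf \<phi> (h1 + h2) = f + g" using h by simp
    moreover have "h1 + h2 \<in> SD" using h sub_add[OF SDs] by blast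
    ultimately show "f + g \<in> {g. \<exists>h\<in>SD. pf \<phi> h = g}" by blast
  next
    fix c f assume "f \<in> {g. \<exists>h\<in>SD. pf \<phi> h = g}"
    then obtain h1 where h: "h1 \<in> SD" "pf \<phi> h1 = f" by blast
    have "pf \<phi> (smul c h1) = smul c (pf \<phi> h1)" by (rule pf_smul[OF SD_fin[OF h(1)]])
    then have "pf \<phi> (smul c h1) = smul c f" using h by simp
    moreover have "smul c h1 \<in> SD" using h sub_smul[OF SDs] by blast
    ultimately show "smul c f \<in> {g. \<exists>h\<in>SD. pf \<phi> h = g}" by blast
  qed
  show "tensor_rels \<psi> \<subseteq> {g. \<exists>h\<in>SD. pf \<phi> h = g}"
  proof
    fix g assume "g \<in> tensor_rels \<psi>"
    then show "g \<in> {g. \<exists>h\<in>SD. pf \<phi> h = g}"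
    proof (cases rule: rels_cases)
      case (1 u v b)
      define h where "h = delta (lft u + lft v) b - delta (lft u) b - delta (lft v) b"
      have "h \<in> SD" unfolding h_def using lft 1 rel1_in RX_rel by blast
      moreover have "pf \<phi> h = g"
        unfolding h_def 1 using lft 1 by (simp add: pf_diff finite_supp_diff finite_supp_delta pf_delta rh_add[OF r\<phi>])
      ultimately show ?thesis by blast
    next
      case (2 a u b)
      obtain a' where a': "\<phi> a' = a" using s\<phi> by (metis surjD)
      define h where "h = delta (a' * lft u) b - delta (lft u) ((\<psi> \<circ> \<phi>) a' * b)"
      have "h \<in> SD" unfolding h_def using lft 2 rel2_in RX_rel by blast
      moreover have "pf \<phi> h = g"
        unfolding h_def 2 using lft 2 a' by (simp add: pf_diff finite_supp_diff finite_supp_delta pf_delta rh_mult[OF r\<phi>])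
      ultimately show ?thesis by blast
    next
      case (3 u b)
      define h where "h = delta (lft u) b"
      have "h \<in> SD" unfolding h_def using lft 3 rel3_in RX_rel by blast
      moreover have "pf \<phi> h = g" unfolding h_def 3 using lft 3 by (simp add: pf_delta)
      ultimately show ?thesis by blast
    qed
  qed
qed

lemma WW_SD: "WW \<subseteq> SD"
proof
  fix f assume f: "f \<in> WW"
  then have fX: "f \<in> FX" and pR: "pf \<phi> f \<in> RY" unfolding WW_def using ker_fs by auto
  obtain h where h: "h \<in> SD" "pf \<phi> h = pf \<phi> f" using RY_lift pR by blast
  have hX: "h \<in> FX" using h SD_FX by blast
  have "f - h \<in> FX" using sub_diff[OF fs_sub fX hX] .
  moreover have "pf \<phi> (f - h) = pf \<phi> f - pf \<phi> h" by (rule pf_diff[OF fs_finite[OF fX] fs_finite[OF hX]])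
  then have "pf \<phi> (f - h) = 0" using h by simp
  ultimately have "f - h \<in> SD" by (rule ker0)
  then have "(f - h) + h \<in> SD" using h(1) by (rule sub_add[OF SDs])
  then show "f \<in> SD" by simp
qed

lemma DD_span:
  assumes S: "finite S" "S \<subseteq> KP" "KP = bspan (RP \<union> S)"
  shows "DD \<subseteq> bspan (RX \<union> (\<lambda>s. \<psi> \<circ> s) ` S)"
proof
  fix g assume "g \<in> DD"
  then obtain x c where g: "g = delta x c" "x \<in> mA" "\<phi> x = 0" unfolding DD_def by blast
  have "delta x (1::'b) \<in> KP"
  proof -
    have "nat_map \<phi> (delta x (1::'b)) = 0" using g by (simp add: nat_map_delta)
    then show ?thesis unfolding ker_reps_def by (simp add: delta_fs[OF g(2)] ideal_0[OF ideal_prod_ideal])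
  qed
  then obtain r k where r: "r \<in> RP" and rk: "delta x (1::'b) = r + (\<Sum>s\<in>S. smul (k s) s)"
    using S(3) bspan_comb[OF bspan_is S(1)] by blast
  have "delta x (1::'c) = \<psi> \<circ> delta x (1::'b)" by (simp add: pc_delta[OF r\<psi>] rh_one[OF r\<psi>])
  also have "\<dots> = (\<psi> \<circ> r) + (\<Sum>s\<in>S. smul (\<psi> (k s)) (\<psi> \<circ> s))"
    unfolding rk pc_add[OF r\<psi>] pc_sum[OF r\<psi>] pc_smul[OF r\<psi>] ..
  also have "\<dots> \<in> bspan (RX \<union> (\<lambda>s. \<psi> \<circ> s) ` S)"
  proof (rule sub_add[OF bspan_is])
    show "\<psi> \<circ> r \<in> bspan (RX \<union> (\<lambda>s. \<psi> \<circ> s) ` S)" using pc_R[OF r] by (rule bspan_inL)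
    show "(\<Sum>s\<in>S. smul (\<psi> (k s)) (\<psi> \<circ> s)) \<in> bspan (RX \<union> (\<lambda>s. \<psi> \<circ> s) ` S)"
      by (intro sub_sum[OF bspan_is] sub_smul[OF bspan_is] bspan_inR) blast
  qed
  finally have "smul c (delta x (1::'c)) \<in> bspan (RX \<union> (\<lambda>s. \<psi> \<circ> s) ` S)" by (rule sub_smul[OF bspan_is])
  then show "g \<in> bspan (RX \<union> (\<lambda>s. \<psi> \<circ> s) ` S)" using g(1) by (simp add: smul_delta)
qed

end


lemma coord_fun:
  fixes R B F :: "('a::comm_ring_1 \<Rightarrow> 'b::comm_ring_1) set" and M :: "'a set"
  assumes l: "local_ring TYPE('b)" and R: "is_bsubmod R" and iB: "indep R B"
    and FB: "F = bspan (R \<union> B)"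
    and Ffin: "\<And>f. f \<in> F \<Longrightarrow> finite (supp f) \<and> supp f \<subseteq> M"
    and Md: "\<And>x. x \<in> M \<Longrightarrow> delta x 1 \<in> F" and s0: "s0 \<in> B"
  shows "\<exists>lf. \<forall>f\<in>F. \<forall>c. f - (\<Sum>b\<in>B. smul (c b) b) \<in> R \<longrightarrow> nat_map lf f - c s0 \<in> max_ideal"
proof -
  have fB: "finite B" using iB indep_finite by blast
  have ex: "\<exists>c. f - (\<Sum>b\<in>B. smul (c b) b) \<in> R" if "f \<in> F" for f
  proof -
    have "f \<in> bspan (R \<union> B)" using that FB by simp
    then have "\<exists>r\<in>R. \<exists>c. f = r + (\<Sum>b\<in>B. smul (c b) b)" by (simp only: bspan_comb[OF R fB])
    then obtain r c where r: "r \<in> R" and fr: "f = r + (\<Sum>b\<in>B. smul (c b) b)" by blast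
    have "f - (\<Sum>b\<in>B. smul (c b) b) = r" unfolding fr by simp
    then have "f - (\<Sum>b\<in>B. smul (c b) b) \<in> R" using r by simp
    then show ?thesis by (rule exI[where x=c])
  qed
  define k where "k x = (SOME c. delta x 1 - (\<Sum>b\<in>B. smul (c b) b) \<in> R)" for x
  have hk: "delta x 1 - (\<Sum>b\<in>B. smul (k x b) b) \<in> R" if "x \<in> M" for x
  proof -
    have "\<exists>c. delta x 1 - (\<Sum>b\<in>B. smul (c b) b) \<in> R" by (rule ex[OF Md[OF that]])
    from someI_ex[OF this] show ?thesis unfolding k_def .
  qed
  define lf where "lf x = k x s0" for x
  show ?thesis
  proof (intro exI ballI allI impI)
    fix f c assume f: "f \<in> F" and hc: "f - (\<Sum>b\<in>B. smul (c b) b) \<in> R"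
    have fin: "finite (supp f)" and sM: "supp f \<subseteq> M" using Ffin[OF f] by auto
    define e where "e b = (\<Sum>x\<in>supp f. f x * k x b)" for b
    have eq: "f - (\<Sum>b\<in>B. smul (e b) b) = (\<Sum>x\<in>supp f. smul (f x) (delta x 1 - (\<Sum>b\<in>B. smul (k x b) b)))"
    proof -
      have "(\<Sum>x\<in>supp f. smul (f x) (delta x 1 - (\<Sum>b\<in>B. smul (k x b) b)))
          = (\<Sum>x\<in>supp f. delta x (f x) - (\<Sum>b\<in>B. smul (f x * k x b) b))"
        by (rule sum.cong) (simp_all add: smul_diff_right smul_delta smul_sum_right smul_smul)
      also have "\<dots> = (\<Sum>x\<in>supp f. delta x (f x)) - (\<Sum>x\<in>supp f. \<Sum>b\<in>B. smul (f x * k x b) b)"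
        by (rule sum_subtractf)
      also have "(\<Sum>x\<in>supp f. \<Sum>b\<in>B. smul (f x * k x b) b) = (\<Sum>b\<in>B. smul (e b) b)"
        unfolding e_def smul_sum_left by (rule sum.swap)
      also have "(\<Sum>x\<in>supp f. delta x (f x)) = f" using decomp[OF fin] by simp
      finally show ?thesis by (rule sym)
    qed
    have "f - (\<Sum>b\<in>B. smul (e b) b) \<in> R"
      unfolding eq by (intro sub_sum[OF R] sub_smul[OF R] hk) (use sM in blast)
    then have "(f - (\<Sum>b\<in>B. smul (e b) b)) - (f - (\<Sum>b\<in>B. smul (c b) b)) \<in> R"
      using hc by (rule sub_diff[OF R])
    moreover have "(f - (\<Sum>b\<in>B. smul (e b) b)) - (f - (\<Sum>b\<in>B. smul (c b) b)) = (\<Sum>b\<in>B. smul (c b - e b) b)"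
      by (simp add: smul_diff_left sum_subtractf)
    ultimately have "c s0 - e s0 \<in> max_ideal" using indepD[OF iB, of "\<lambda>b. c b - e b" s0] s0 by simp
    moreover have "nat_map lf f = e s0" unfolding nat_map_def lf_def e_def by (simp add: mult.commute)
    ultimately show "nat_map lf f - c s0 \<in> max_ideal"
      using ideal_uminus[OF max_ideal_ideal[OF l]] by (metis minus_diff_eq)
  qed
qed


context cset
begin

lemma indep_fam:
  assumes SB: "S \<subseteq> B" and fS: "finite S" and iB: "indep RP B" and FB: "FP = bspan (RP \<union> B)"
    and H: "(\<Sum>s\<in>S. smul (c s) (\<psi> \<circ> s)) \<in> RX" and s0: "s0 \<in> S"
  shows "c s0 \<in> mC"
proof -
  have BF: "B \<subseteq> FP" using FB bspan_subR by blast
  obtain lf where lf: "\<forall>f\<in>FP. \<forall>c. f - (\<Sum>b\<in>B. smul (c b) b) \<in> RP \<longrightarrow> nat_map lf f - c s0 \<in> mB"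
    using coord_fun[OF lb bspan_is iB FB, of mA s0] fs_finite fs_supp delta_fs SB s0 by blast
  have RPF: "RP \<subseteq> FP" using R_fs[OF la] .
  have pa: "nat_map lf g \<in> mB" if g: "g \<in> RP" for g
  proof -
    have gF: "g \<in> FP" using RPF g by blast
    have "nat_map lf g - (\<lambda>_. 0) s0 \<in> mB"
      by (rule lf[rule_format, of g "\<lambda>_. 0"]) (use gF g in simp_all)
    then show ?thesis by simp
  qed
  have pb: "nat_map lf s - (if s0 = s then 1 else 0) \<in> mB" if s: "s \<in> B" for s
  proof -
    have fB: "finite B" using iB indep_finite by blast
    have "s - (\<Sum>b\<in>B. smul ((\<lambda>b. if b = s then 1 else 0) b) b) = 0"
      using indicator_sum[OF fB s] by simp
    then have X: "s - (\<Sum>b\<in>B. smul ((\<lambda>b. if b = s then 1 else 0) b) b) \<in> RP"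
      by (simp add: sub_zero[OF bspan_is])
    have sF: "s \<in> FP" using BF s by blast
    have "nat_map lf s - (\<lambda>b. if b = s then 1 else 0) s0 \<in> mB"
      by (rule lf[rule_format, of s "\<lambda>b. if b = s then 1 else 0"]) (use sF X in simp_all)
    then show ?thesis by simp
  qed
  define Lam where "Lam g = nat_map (\<psi> \<circ> lf) g" for g :: "'a \<Rightarrow> 'c"
  have rhpsi: "\<psi> x \<in> mC" if "x \<in> mB" for x using lh_max[OF h\<psi> that] .
  have Q1: "Lam g \<in> mC" if g: "g \<in> RX" for g
  proof -
    define U where "U = {g :: 'a \<Rightarrow> 'c. finite (supp g) \<and> Lam g \<in> mC}"
    have "is_bsubmod U"
    proof (rule sub_intro)
      show "0 \<in> U" unfolding U_def Lam_def by (simp add: ideal_0[OF mCi])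
      fix f g assume "f \<in> U" "g \<in> U"
      then have ff: "finite (supp f)" and fg: "finite (supp g)" and lfm: "Lam f \<in> mC" and lgm: "Lam g \<in> mC"
        by (auto simp: U_def)
      have "Lam (f + g) = Lam f + Lam g" unfolding Lam_def by (rule nat_map_add[OF ff fg])
      then have "Lam (f + g) \<in> mC" using ideal_add[OF mCi lfm lgm] by simp
      then show "f + g \<in> U" unfolding U_def using finite_supp_add[OF ff fg] by blast
    next
      fix c f assume "f \<in> U"
      then have ff: "finite (supp f)" and lfm: "Lam f \<in> mC" by (auto simp: U_def)
      have "Lam (smul c f) = c * Lam f" unfolding Lam_def by (rule nat_map_smul[OF ff])
      then have "Lam (smul c f) \<in> mC" using ideal_mult[OF mCi lfm] by simp
      then show "smul c f \<in> U" unfolding U_def using finite_supp_smul[OF ff] by blast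
    qed
    moreover have "tensor_rels (\<psi> \<circ> \<phi>) \<subseteq> U"
    proof
      fix g assume "g \<in> tensor_rels (\<psi> \<circ> \<phi>)"
      then have fin: "finite (supp g)" using rels_fs[OF la] fs_finite by blast
      from \<open>g \<in> tensor_rels (\<psi> \<circ> \<phi>)\<close> have "Lam g \<in> mC"
      proof (cases rule: rels_cases)
        case (1 x y b)
        have "Lam g = \<psi> (lf (x + y)) * b - \<psi> (lf x) * b - \<psi> (lf y) * b"
          unfolding 1 Lam_def
          by (simp add: nat_map_diff finite_supp_diff finite_supp_delta nat_map_delta)
        also have "\<dots> = \<psi> (lf (x + y) - lf x - lf y) * b"
          by (simp add: rh_diff[OF r\<psi>] rh_add[OF r\<psi>] algebra_simps)
        finally have e1: "Lam g = \<psi> (lf (x + y) - lf x - lf y) * b" .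
        have "nat_map lf (delta (x + y) 1 - delta x 1 - delta y 1) \<in> mB"
          using pa rel1_in[OF 1(1,2), of 1 \<phi>] bspan_incl by blast
        then have "lf (x + y) - lf x - lf y \<in> mB"
          by (simp add: nat_map_diff finite_supp_diff finite_supp_delta nat_map_delta)
        then show ?thesis unfolding e1 using rhpsi ideal_mult2[OF mCi] by blast
      next
        case (2 a x b)
        have "Lam g = \<psi> (lf (a * x)) * b - \<psi> (lf x) * (\<psi> (\<phi> a) * b)"
          unfolding 2 Lam_def
          by (simp add: nat_map_diff finite_supp_diff finite_supp_delta nat_map_delta)
        also have "\<dots> = \<psi> (lf (a * x) - lf x * \<phi> a) * b"
          by (simp add: rh_diff[OF r\<psi>] rh_mult[OF r\<psi>] algebra_simps)
        finally have e2: "Lam g = \<psi> (lf (a * x) - lf x * \<phi> a) * b" .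
        have "nat_map lf (delta (a * x) 1 - delta x (\<phi> a * 1)) \<in> mB"
          using pa rel2_in[OF 2(1), of a 1 \<phi>] bspan_incl by blast
        then have "lf (a * x) - lf x * \<phi> a \<in> mB"
          by (simp add: nat_map_diff finite_supp_diff finite_supp_delta nat_map_delta)
        then show ?thesis unfolding e2 using rhpsi ideal_mult2[OF mCi] by blast
      next
        case (3 x b)
        have "Lam g = \<psi> (lf x) * b" unfolding 3 Lam_def by (simp add: nat_map_delta)
        then show ?thesis using 3 ideal_mult[OF mCi] by simp
      qed
      then show "g \<in> U" unfolding U_def using fin by blast
    qed
    ultimately have "RX \<subseteq> U" by (rule bspan_sub)
    then show ?thesis using g unfolding U_def by blast
  qed
  have Q2: "Lam (\<psi> \<circ> f) = \<psi> (nat_map lf f)" if f: "f \<in> FP" for f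
  proof -
    have "Lam (\<psi> \<circ> f) = (\<Sum>x\<in>supp f. (\<psi> \<circ> lf) x * (\<psi> \<circ> f) x)"
      unfolding Lam_def using supp_pc[OF r\<psi>, of f] fs_finite[OF f] by (intro nat_map_superset)
    also have "\<dots> = \<psi> (nat_map lf f)" by (simp add: nat_map_def rh_sum[OF r\<psi>] rh_mult[OF r\<psi>])
    finally show ?thesis .
  qed
  have SF: "\<And>s. s \<in> S \<Longrightarrow> s \<in> FP" using SB BF by blast
  have finpc: "\<And>s. s \<in> S \<Longrightarrow> finite (supp (\<psi> \<circ> s))" using SF pc_fs[OF r\<psi>] fs_finite by blast
  have "Lam (\<Sum>s\<in>S. smul (c s) (\<psi> \<circ> s)) = (\<Sum>s\<in>S. Lam (smul (c s) (\<psi> \<circ> s)))"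
    unfolding Lam_def by (rule nat_map_sum) (use finpc finite_supp_smul in blast)
  also have "\<dots> = (\<Sum>s\<in>S. c s * \<psi> (nat_map lf s))"
    by (rule sum.cong) (simp_all add: Lam_def nat_map_smul finpc Q2[unfolded Lam_def] SF)
  finally have L: "(\<Sum>s\<in>S. c s * \<psi> (nat_map lf s)) \<in> mC" using Q1[OF H] by simp
  define d where "d s = nat_map lf s - (if s0 = s then 1 else 0)" for s
  have dm: "\<psi> (d s) \<in> mC" if "s \<in> S" for s
  proof -
    have "d s \<in> mB" unfolding d_def using pb[of s] SB that by blast
    then show ?thesis by (rule rhpsi)
  qed
  have pt: "c s * \<psi> (nat_map lf s) = c s * \<psi> (d s) + c s * \<psi> (if s0 = s then 1 else 0)" for s
  proof -
    have "nat_map lf s = d s + (if s0 = s then 1 else 0)" by (simp add: d_def)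
    then show ?thesis by (simp only: rh_add[OF r\<psi>] distrib_left)
  qed
  have "(\<Sum>s\<in>S. c s * \<psi> (nat_map lf s)) = (\<Sum>s\<in>S. c s * \<psi> (d s) + c s * \<psi> (if s0 = s then 1 else 0))"
    by (rule sum.cong) (rule refl, rule pt)
  also have "\<dots> = (\<Sum>s\<in>S. c s * \<psi> (d s)) + (\<Sum>s\<in>S. c s * \<psi> (if s0 = s then 1 else 0))"
    by (rule sum.distrib)
  also have "(\<Sum>s\<in>S. c s * \<psi> (if s0 = s then 1 else 0)) = c s0"
    using fS s0 by (simp add: rh_one[OF r\<psi>] rh_zero[OF r\<psi>] if_distrib[of \<psi>] if_distrib[of "(*) _"] sum.delta cong: if_cong)
  finally have "c s0 = (\<Sum>s\<in>S. c s * \<psi> (nat_map lf s)) - (\<Sum>s\<in>S. c s * \<psi> (d s))" by simp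
  also have "\<dots> \<in> mC"
    by (rule ideal_diff[OF mCi L]) (intro ideal_sum[OF mCi] ideal_mult[OF mCi] dm)
  finally show ?thesis .
qed

lemma base_change: "mu WW RX = mu KP RP"
proof -
  obtain G where G: "finite G" "G \<subseteq> KP" "KP = bspan (RP \<union> G)" using facts\<phi>(3) by blast
  obtain S where S: "finite S" "card S = mu KP RP" "S \<subseteq> KP" "KP = bspan (RP \<union> S)"
    using mu_ex[OF G] by blast
  have iS: "indep RP S" using min_gen_indep[OF lb bspan_is S(1) S(3) S(4) S(2)] .
  obtain Gf where Gf: "finite Gf" "Gf \<subseteq> FP" "FP = bspan (RP \<union> Gf)" using fg_fs[OF na h\<phi>] by blast
  have SFP: "S \<subseteq> FP" using S(3) ker_fs by blast
  obtain B where B: "S \<subseteq> B" "B \<subseteq> FP" "indep RP B" "FP = bspan (RP \<union> B)"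
    using ext_gen[OF lb facts\<phi>(4) R_fs[OF la] fs_sub order_refl Gf(1,2) _ iS SFP] Gf(3) by blast
  have fam: "c s0 \<in> mC" if "(\<Sum>s\<in>S. smul (c s) (\<psi> \<circ> s)) \<in> RX" "s0 \<in> S" for c s0
    using indep_fam[OF B(1) S(1) B(3) B(4) that] .
  have ind1: "(\<Sum>s\<in>S. smul (if s = v then 1 else 0) (g s)) = g v" if "v \<in> S" for v and g :: "('a \<Rightarrow> 'b) \<Rightarrow> ('a \<Rightarrow> 'c)"
    using S(1) that by (simp add: if_distrib[of "\<lambda>c. smul c _"] sum.delta cong: if_cong)
  have inj: "inj_on (\<lambda>s. \<psi> \<circ> s) S"
  proof (rule inj_onI, rule ccontr)
    fix s1 s2 assume s1: "s1 \<in> S" and s2: "s2 \<in> S" and eq: "\<psi> \<circ> s1 = \<psi> \<circ> s2" and ne: "s1 \<noteq> s2"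
    define c where "c s = (if s = s1 then 1 else 0) - (if s = s2 then (1::'c) else 0)" for s
    have "(\<Sum>s\<in>S. smul (c s) (\<psi> \<circ> s)) = (\<Sum>s\<in>S. smul (if s = s1 then 1 else 0) (\<psi> \<circ> s)) - (\<Sum>s\<in>S. smul (if s = s2 then 1 else 0) (\<psi> \<circ> s))"
      unfolding c_def smul_diff_left by (rule sum_subtractf)
    also have "\<dots> = 0" using ind1[OF s1, of "\<lambda>s. \<psi> \<circ> s"] ind1[OF s2, of "\<lambda>s. \<psi> \<circ> s"] eq by simp
    finally have "(\<Sum>s\<in>S. smul (c s) (\<psi> \<circ> s)) \<in> RX" by (simp add: sub_zero[OF RXs])
    then have "c s1 \<in> mC" using fam s1 by blast
    then show False using ne one_notin_max[OF lc] by (simp add: c_def)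
  qed
  define T where "T = (\<lambda>s. \<psi> \<circ> s) ` S"
  have cT: "card T = card S" unfolding T_def using card_image[OF inj] .
  have iT: "indep RX T"
    unfolding indep_def
  proof (intro conjI allI impI ballI)
    show "finite T" using S(1) T_def by simp
    fix c t assume H: "(\<Sum>t\<in>T. smul (c t) t) \<in> RX" and t: "t \<in> T"
    have "(\<Sum>t\<in>T. smul (c t) t) = (\<Sum>s\<in>S. smul (c (\<psi> \<circ> s)) (\<psi> \<circ> s))"
      unfolding T_def sum.reindex[OF inj] by (rule sum.cong) (simp_all only: o_apply)
    then have "(\<Sum>s\<in>S. smul (c (\<psi> \<circ> s)) (\<psi> \<circ> s)) \<in> RX" using H by simp
    moreover obtain s where "s \<in> S" "t = \<psi> \<circ> s" using t T_def by blast
    ultimately show "c t \<in> mC" using fam[of "\<lambda>s. c (\<psi> \<circ> s)" s] by simp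
  qed
  have TW: "T \<subseteq> WW" unfolding T_def using pc_KP S(3) by blast
  have WT: "WW = bspan (RX \<union> T)"
  proof
    have "DD \<subseteq> bspan (RX \<union> T)" unfolding T_def using DD_span[OF S(1) S(3) S(4)] .
    then have "SD \<subseteq> bspan (RX \<union> T)" using bspan_subL[of RX T] by (intro bspan_sub bspan_is) blast
    then show "WW \<subseteq> bspan (RX \<union> T)" using WW_SD by blast
    show "bspan (RX \<union> T) \<subseteq> WW" using RX_WW TW by (intro bspan_sub WW_sub) blast
  qed
  have gW: "good WW RX" using facts\<chi>(1) WW_KX unfolding good_def by blast
  have "mu WW RX = card T" using mu_basis[OF lc gW iT TW WT] .
  then show ?thesis using cT S(2) by simp
qed

lemma main: "rd (\<psi> \<circ> \<phi>) = rd \<phi> + rd \<psi>"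
proof -
  have "rd (\<psi> \<circ> \<phi>) = mu KX RX" by (simp add: rd_mu mu_bspan)
  also have "\<dots> = mu WW RX + mu KX WW" by (rule mu_split)
  also have "\<dots> = mu KP RP + mu KY RY" by (simp add: base_change mu_top)
  also have "\<dots> = rd \<phi> + rd \<psi>" by (simp add: rd_mu mu_bspan)
  finally show ?thesis .
qed

end

theorem corollary3p10:
  fixes \<phi> :: "'a::comm_ring_1 \<Rightarrow> 'b::comm_ring_1" and \<psi> :: "'b \<Rightarrow> 'c::comm_ring_1"
  assumes "noetherian_local_ring TYPE('a)"
    and "noetherian_local_ring TYPE('b)"
    and "noetherian_local_ring TYPE('c)"
    and "local_hom \<phi>" and "local_hom \<psi>"
    and "surj \<phi>"
  shows "rd (\<psi> \<circ> \<phi>) = rd \<phi> + rd \<psi>"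
proof -
  interpret cset \<phi> \<psi>
    using assms by unfold_locales (simp_all add: noetherian_local_ring_def)
  show ?thesis by (rule main)
qed

end
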